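(* Let $a_1,b_1,a'_1,b'_1,a_2,b_2,a'_2,b'_2\ge 0$ be such that the vectors $v_1=(a'_1-a_1,\,b'_1-b_1)$ and $v_2=(a'_2-a_2,\,b'_2-b_2)$ are linearly independent, and let $\epsilon\in(0,1)$. For rate functions $k_1(t),k_2(t),k_3(t),k_4(t)$ consider the system on $\mathbb{R}^2_{>0}$ $$\begin{pmatrix}\dot x\\ \dot y\end{pmatrix}=\big(k_1(t)x^{a_1}y^{b_1}-k_2(t)x^{a'_1}y^{b'_1}\big)v_1+\big(k_3(t)x^{a_2}y^{b_2}-k_4(t)x^{a'_2}y^{b'_2}\big)v_2 .$$ Consider the curves $\mathcal{C}_1: x^{a'_1-a_1}y^{b'_1-b_1}=\frac{1}{\epsilon^2}$, $\mathcal{C}_2: x^{a'_1-a_1}y^{b'_1-b_1}=\epsilon^2$, $\mathcal{C}_3: x^{a'_2-a_2}y^{b'_2-b_2}=\epsilon^2$, $\mathcal{C}_4: x^{a'_2-a_2}y^{b'_2-b_2}=\frac{1}{\epsilon^2}$ in $\mathbb{R}^2_{>0}$, and let $A=\mathcal{C}_2\cap\mathcal{C}_4$, $B=\mathcal{C}_1\cap\mathcal{C}_4$, $C=\mathcal{C}_1\cap\mathcal{C}_3$, $D=\mathcal{C}_2\cap\mathcal{C}_3$ (each a single point). Let $\mathbf{x}(t)$ be a solution with $\mathbf{x}(0)\in\mathbb{R}^2_{>0}$. Then: (i) if $k_1\equiv\epsilon,k_2\equiv\frac1\epsilon,k_3\equiv\frac1\epsilon,k_4\equiv\epsilon$, then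 $\lim_{t\to\infty}\mathbf{x}(t)=A$; (ii) if $k_1\equiv\frac1\epsilon,k_2\equiv\epsilon,k_3\equiv\frac1\epsilon,k_4\equiv\epsilon$, then $\lim_{t\to\infty}\mathbf{x}(t)=B$; (iii) if $k_1\equiv\frac1\epsilon,k_2\equiv\epsilon,k_3\equiv\epsilon,k_4\equiv\frac1\epsilon$, then $\lim_{t\to\infty}\mathbf{x}(t)=C$; (iv) if $k_1\equiv\epsilon,k_2\equiv\frac1\epsilon,k_3\equiv\epsilon,k_4\equiv\frac1\epsilon$, then $\lim_{t\to\infty}\mathbf{x}(t)=D$.
   Context: The system is the mass-action system of the reaction network $a_1X+b_1Y\rightleftharpoons a'_1X+b'_1Y$ (forward rate $k_1$, backward rate $k_2$) and $a_2X+b_2Y\rightleftharpoons a'_2X+b'_2Y$ (forward rate $k_3$, backward rate $k_4$); in the variable-$k$ setting the rates are allowed to vary in time with values in $[\epsilon,1/\epsilon]$, here they are fixed constants. *)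

theory Defs
  imports "HOL-Analysis.Analysis"
begin

definition pos_quad :: "(real \<times> real) set" where
  "pos_quad = {p. fst p > 0 \<and> snd p > 0}"

definition mono2 :: "real \<Rightarrow> real \<Rightarrow> real \<times> real \<Rightarrow> real" where
  "mono2 a b p = fst p powr a * snd p powr b"

definition ma_field ::
  "real \<Rightarrow> real \<Rightarrow> real \<Rightarrow> real \<Rightarrow> real \<Rightarrow> real \<Rightarrow> real \<Rightarrow> real \<Rightarrow>
   real \<Rightarrow> real \<Rightarrow> real \<Rightarrow> real \<Rightarrow> real \<times> real \<Rightarrow> real \<times> real" where
  "ma_field a1 b1 a1' b1' a2 b2 a2' b2' k1 k2 k3 k4 p =
     (k1 * mono2 a1 b1 p - k2 * mono2 a1' b1' p) *\<^sub>R (a1' - a1, b1' - b1)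
   + (k3 * mono2 a2 b2 p - k4 * mono2 a2' b2' p) *\<^sub>R (a2' - a2, b2' - b2)"

definition is_solution ::
  "real \<Rightarrow> real \<Rightarrow> real \<Rightarrow> real \<Rightarrow> real \<Rightarrow> real \<Rightarrow> real \<Rightarrow> real \<Rightarrow>
   real \<Rightarrow> real \<Rightarrow> real \<Rightarrow> real \<Rightarrow> (real \<Rightarrow> real \<times> real) \<Rightarrow> bool" where
  "is_solution a1 b1 a1' b1' a2 b2 a2' b2' k1 k2 k3 k4 x \<longleftrightarrow>
     (\<forall>t\<ge>0. x t \<in> pos_quad \<and>
        (x has_vector_derivative
           ma_field a1 b1 a1' b1' a2 b2 a2' b2' k1 k2 k3 k4 (x t)) (at t within {0..}))"

end

theory Submission
  imports Defs
begin

lemma cont_neg_nbhd: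
  fixes f :: "real \<Rightarrow> real"
  assumes "continuous (at \<tau> within {0..}) f" "f \<tau> < c"
  shows "\<exists>d>0. \<forall>s\<ge>0. \<bar>s - \<tau>\<bar> < d \<longrightarrow> f s < c"
proof -
  from assms(1)[unfolded continuous_within_eps_delta, rule_format, of "c - f \<tau>"] assms(2)
  obtain d where "d>0" "\<forall>s\<in>{0..}. dist s \<tau> < d \<longrightarrow> dist (f s) (f \<tau>) < c - f \<tau>" by auto
  then show ?thesis by (intro exI[of _ d]) (auto simp: dist_real_def)
qed

lemma cont_pos_nbhd:
  fixes f :: "real \<Rightarrow> real"
  assumes "continuous (at \<tau> within {0..}) f" "f \<tau> > c"
  shows "\<exists>d>0. \<forall>s\<ge>0. \<bar>s - \<tau>\<bar> < d \<longrightarrow> f s > c"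
proof -
  from assms(1)[unfolded continuous_within_eps_delta, rule_format, of "f \<tau> - c"] assms(2)
  obtain d where "d>0" "\<forall>s\<in>{0..}. dist s \<tau> < d \<longrightarrow> dist (f s) (f \<tau>) < f \<tau> - c" by auto
  then show ?thesis by (intro exI[of _ d]) (auto simp: dist_real_def)
qed

lemma right_nonneg:
  fixes f f' :: "real \<Rightarrow> real"
  assumes df: "(f has_real_derivative l) (at \<tau> within {0..})" and "\<tau> \<ge> 0"
    and "f \<tau> \<ge> 0" and "f \<tau> = 0 \<Longrightarrow> l > 0"
  shows "\<exists>d>0. \<forall>s. \<tau> < s \<and> s < \<tau> + d \<longrightarrow> f s \<ge> 0"
proof (cases "f \<tau> = 0")
  case True
  then have "l > 0" using assms by auto
  from has_real_derivative_pos_inc_right[OF df this] obtain d where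
    "d>0" "\<forall>h>0. \<tau> + h \<in> {0..} \<longrightarrow> h < d \<longrightarrow> f \<tau> < f (\<tau> + h)" by auto
  then show ?thesis using True \<open>\<tau> \<ge> 0\<close>
  proof (intro exI[of _ d] conjI allI impI)
    fix s assume s: "\<tau> < s \<and> s < \<tau> + d"
    have "f \<tau> < f (\<tau> + (s - \<tau>))"
    proof -
      have "s - \<tau> > 0" "s - \<tau> < d" "\<tau> + (s - \<tau>) \<in> {0..}" using s \<open>\<tau> \<ge> 0\<close> by auto
      then show ?thesis using \<open>\<forall>h>0. \<tau> + h \<in> {0..} \<longrightarrow> h < d \<longrightarrow> f \<tau> < f (\<tau> + h)\<close> by blast
    qed
    then show "f s \<ge> 0" using True by simp
  qed (rule \<open>d > 0\<close>)
next
  case False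
  then have "f \<tau> > 0" using assms by auto
  from cont_pos_nbhd[OF DERIV_continuous[OF df] this] obtain d where
    "d>0" "\<forall>s\<ge>0. \<bar>s - \<tau>\<bar> < d \<longrightarrow> f s > 0" by auto
  then show ?thesis using \<open>\<tau> \<ge> 0\<close> by (intro exI[of _ d]) (auto simp: less_imp_le)
qed

lemma invariance2:
  fixes f g f' g' :: "real \<Rightarrow> real"
  assumes df: "\<And>t. t \<ge> 0 \<Longrightarrow> (f has_real_derivative f' t) (at t within {0..})"
    and dg: "\<And>t. t \<ge> 0 \<Longrightarrow> (g has_real_derivative g' t) (at t within {0..})"
    and f0: "f 0 \<ge> 0" and g0: "g 0 \<ge> 0"
    and ff: "\<And>t. t \<ge> 0 \<Longrightarrow> f t = 0 \<Longrightarrow> g t \<ge> 0 \<Longrightarrow> f' t > 0"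
    and gg: "\<And>t. t \<ge> 0 \<Longrightarrow> g t = 0 \<Longrightarrow> f t \<ge> 0 \<Longrightarrow> g' t > 0"
  shows "\<forall>t\<ge>0. f t \<ge> 0 \<and> g t \<ge> 0"
proof (rule ccontr)
  define Bad where "Bad = {t. 0 \<le> t \<and> (f t < 0 \<or> g t < 0)}"
  assume "\<not> (\<forall>t\<ge>0. f t \<ge> 0 \<and> g t \<ge> 0)"
  then obtain t0 where t0: "t0 \<in> Bad" unfolding Bad_def by (auto simp: not_le)
  define \<tau> where "\<tau> = Inf Bad"
  have bdd: "bdd_below Bad" unfolding Bad_def by (rule bdd_belowI[of _ 0]) auto
  have lb: "\<And>b. b \<in> Bad \<Longrightarrow> \<tau> \<le> b" unfolding \<tau>_def using bdd by (simp add: cInf_lower)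
  have "0 \<le> \<tau>" unfolding \<tau>_def using t0 by (intro cInf_greatest) (auto simp: Bad_def)
  have before: "f s \<ge> 0 \<and> g s \<ge> 0" if "0 \<le> s" "s < \<tau>" for s
    using lb[of s] that unfolding Bad_def by force
  have atf: "f \<tau> \<ge> 0"
  proof (rule ccontr)
    assume "\<not> f \<tau> \<ge> 0"
    then have "f \<tau> < 0" by simp
    from cont_neg_nbhd[OF DERIV_continuous[OF df[OF \<open>0 \<le> \<tau>\<close>]] this] obtain d where
      d: "d>0" "\<forall>s\<ge>0. \<bar>s - \<tau>\<bar> < d \<longrightarrow> f s < 0" by auto
    show False
    proof (cases "\<tau> = 0")
      case True then show ?thesis using f0 \<open>f \<tau> < 0\<close> by simp
    next
      case False
      define s where "s = max (\<tau>/2) (\<tau> - d/2)"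
      have "0 \<le> s" "s < \<tau>" "\<bar>s - \<tau>\<bar> < d" using False \<open>0 \<le> \<tau>\<close> d(1) unfolding s_def by auto
      then show ?thesis using before[of s] d(2) by force
    qed
  qed
  have atg: "g \<tau> \<ge> 0"
  proof (rule ccontr)
    assume "\<not> g \<tau> \<ge> 0"
    then have "g \<tau> < 0" by simp
    from cont_neg_nbhd[OF DERIV_continuous[OF dg[OF \<open>0 \<le> \<tau>\<close>]] this] obtain d where
      d: "d>0" "\<forall>s\<ge>0. \<bar>s - \<tau>\<bar> < d \<longrightarrow> g s < 0" by auto
    show False
    proof (cases "\<tau> = 0")
      case True then show ?thesis using g0 \<open>g \<tau> < 0\<close> by simp
    next
      case False
      define s where "s = max (\<tau>/2) (\<tau> - d/2)"
      have "0 \<le> s" "s < \<tau>" "\<bar>s - \<tau>\<bar> < d" using False \<open>0 \<le> \<tau>\<close> d(1) unfolding s_def by auto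
      then show ?thesis using before[of s] d(2) by force
    qed
  qed
  obtain d1 where d1: "d1>0" "\<forall>s. \<tau> < s \<and> s < \<tau> + d1 \<longrightarrow> f s \<ge> 0"
    using right_nonneg[OF df[OF \<open>0 \<le> \<tau>\<close>] \<open>0 \<le> \<tau>\<close> atf] ff[OF \<open>0 \<le> \<tau>\<close> _ atg] by blast
  obtain d2 where d2: "d2>0" "\<forall>s. \<tau> < s \<and> s < \<tau> + d2 \<longrightarrow> g s \<ge> 0"
    using right_nonneg[OF dg[OF \<open>0 \<le> \<tau>\<close>] \<open>0 \<le> \<tau>\<close> atg] gg[OF \<open>0 \<le> \<tau>\<close> _ atf] by blast
  have "\<tau> + min d1 d2 \<le> \<tau>"
    unfolding \<tau>_def
  proof (rule cInf_greatest)
    show "Bad \<noteq> {}" using t0 by auto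
    fix b assume "b \<in> Bad"
    then have "\<tau> \<le> b" "b \<noteq> \<tau>" using lb atf atg unfolding Bad_def by auto
    have bb: "f b < 0 \<or> g b < 0" using \<open>b \<in> Bad\<close> unfolding Bad_def by auto
    show "Inf Bad + min d1 d2 \<le> b" unfolding \<tau>_def[symmetric]
    proof (rule ccontr)
      assume "\<not> \<tau> + min d1 d2 \<le> b"
      then have "\<tau> < b" "b < \<tau> + d1" "b < \<tau> + d2" using \<open>\<tau> \<le> b\<close> \<open>b \<noteq> \<tau>\<close> by auto
      then show False using d1(2) d2(2) bb by force
    qed
  qed
  then show False using d1 d2 by simp
qed


lemma small_pow:
  fixes a \<kappa> :: real
  assumes "a > 0" "\<kappa> > 0"
  shows "\<exists>c>0. \<forall>s. 0 < s \<longrightarrow> s \<le> c \<longrightarrow> s powr a < \<kappa>"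
proof -
  define c where "c = (\<kappa>/2) powr (1/a)"
  have "c > 0" using assms unfolding c_def by simp
  moreover have "s powr a < \<kappa>" if "0 < s" "s \<le> c" for s
  proof -
    have "s powr a \<le> c powr a" using that assms by (intro powr_mono2) auto
    also have "c powr a = \<kappa>/2" unfolding c_def using assms by (simp add: powr_powr)
    finally show ?thesis using assms by simp
  qed
  ultimately show ?thesis by blast
qed

lemma big_pow:
  fixes a \<kappa> :: real
  assumes "a < 0" "\<kappa> > 0"
  shows "\<exists>c>0. \<forall>s. 0 < s \<longrightarrow> s \<le> c \<longrightarrow> s powr a > \<kappa>"
proof -
  define c where "c = (2*\<kappa>) powr (1/a)"
  have "c > 0" using assms unfolding c_def by simp
  moreover have "s powr a > \<kappa>" if "0 < s" "s \<le> c" for s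
  proof -
    have "s powr a \<ge> c powr a" using that assms by (intro powr_mono2') auto
    moreover have "c powr a = 2*\<kappa>" unfolding c_def using assms by (simp add: powr_powr)
    ultimately show ?thesis using assms by simp
  qed
  ultimately show ?thesis by blast
qed

lemma mono_small:
  fixes a b \<kappa> :: real
  assumes "a \<ge> 0" "b \<ge> 0" "a > 0 \<or> b > 0" "\<kappa> > 0"
  shows "\<exists>c>0. \<forall>p1 p2. 0 < p1 \<longrightarrow> p1 \<le> c \<longrightarrow> 0 < p2 \<longrightarrow> p2 \<le> c \<longrightarrow> p1 powr a * p2 powr b < \<kappa>"
proof (cases "a > 0")
  case True
  obtain c where c: "c>0" "\<forall>s. 0 < s \<longrightarrow> s \<le> c \<longrightarrow> s powr a < \<kappa>" using small_pow[OF True assms(4)] by auto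
  show ?thesis
  proof (intro exI[of _ "min c 1"] conjI allI impI)
    fix p1 p2 :: real assume h: "0 < p1" "p1 \<le> min c 1" "0 < p2" "p2 \<le> min c 1"
    have "p2 powr b \<le> 1" using h assms by (intro powr_le1) auto
    moreover have "p1 powr a < \<kappa>" using c h by auto
    moreover have "p1 powr a > 0" using h by simp
    ultimately show "p1 powr a * p2 powr b < \<kappa>"
      by (smt (verit) mult_left_le mult_nonneg_nonneg)
  qed (use c in auto)
next
  case False
  then have "a = 0" "b > 0" using assms by auto
  obtain c where c: "c>0" "\<forall>s. 0 < s \<longrightarrow> s \<le> c \<longrightarrow> s powr b < \<kappa>" using small_pow[OF \<open>b>0\<close> assms(4)] by auto
  show ?thesis
    by (intro exI[of _ c]) (use c \<open>a = 0\<close> in auto)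
qed

lemma mono_big:
  fixes a b \<kappa> :: real
  assumes "a \<le> 0" "b \<le> 0" "a < 0 \<or> b < 0" "\<kappa> > 0"
  shows "\<exists>c>0. \<forall>p1 p2. 0 < p1 \<longrightarrow> p1 \<le> c \<longrightarrow> 0 < p2 \<longrightarrow> p2 \<le> c \<longrightarrow> p1 powr a * p2 powr b > \<kappa>"
proof (cases "a < 0")
  case True
  obtain c where c: "c>0" "\<forall>s. 0 < s \<longrightarrow> s \<le> c \<longrightarrow> s powr a > \<kappa>" using big_pow[OF True assms(4)] by auto
  show ?thesis
  proof (intro exI[of _ "min c 1"] conjI allI impI)
    fix p1 p2 :: real assume h: "0 < p1" "p1 \<le> min c 1" "0 < p2" "p2 \<le> min c 1"
    have "p2 powr b \<ge> 1 powr b" using h assms by (intro powr_mono2') auto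
    then have "p2 powr b \<ge> 1" by simp
    moreover have "p1 powr a > \<kappa>" using c h by auto
    ultimately show "p1 powr a * p2 powr b > \<kappa>"
    proof -
      have "p1 powr a * 1 \<le> p1 powr a * p2 powr b" using \<open>p2 powr b \<ge> 1\<close> h by (intro mult_left_mono) auto
      then show ?thesis using \<open>p1 powr a > \<kappa>\<close> by simp
    qed
  qed (use c in auto)
next
  case False
  then have "a = 0" "b < 0" using assms by auto
  obtain c where c: "c>0" "\<forall>s. 0 < s \<longrightarrow> s \<le> c \<longrightarrow> s powr b > \<kappa>" using big_pow[OF \<open>b<0\<close> assms(4)] by auto
  show ?thesis
    by (intro exI[of _ c]) (use c \<open>a = 0\<close> in auto)
qed

lemma edge_mono:
  fixes a b \<kappa> d K :: real
  assumes "a \<noteq> 0" "\<kappa> > 0" "0 < d" "d \<le> K"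
  shows "\<exists>e>0. \<forall>p1 p2. 0 < p1 \<longrightarrow> p1 \<le> e \<longrightarrow> d \<le> p2 \<longrightarrow> p2 \<le> K \<longrightarrow>
     (a > 0 \<longrightarrow> p1 powr a * p2 powr b < \<kappa>) \<and> (a < 0 \<longrightarrow> p1 powr a * p2 powr b > \<kappa>)"
proof -
  define B where "B = max (d powr b) (K powr b)"
  define bb where "bb = min (d powr b) (K powr b)"
  have Bp: "B > 0" "bb > 0" unfolding B_def bb_def using assms by (auto simp: less_max_iff_disj)
  have bnd: "bb \<le> p2 powr b \<and> p2 powr b \<le> B" if "d \<le> p2" "p2 \<le> K" for p2
  proof (cases "b \<ge> 0")
    case True
    then have "d powr b \<le> p2 powr b" "p2 powr b \<le> K powr b" using that assms by (auto intro: powr_mono2)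
    then show ?thesis unfolding B_def bb_def by auto
  next
    case False
    then have "p2 powr b \<le> d powr b" "K powr b \<le> p2 powr b" using that assms by (auto intro: powr_mono2')
    then show ?thesis unfolding B_def bb_def by auto
  qed
  show ?thesis
  proof (cases "a > 0")
    case True
    obtain c where c: "c>0" "\<forall>s. 0 < s \<longrightarrow> s \<le> c \<longrightarrow> s powr a < \<kappa>/B"
      using small_pow[OF True, of "\<kappa>/B"] assms Bp by auto
    show ?thesis
    proof (intro exI[of _ c] conjI allI impI)
      fix p1 p2 :: real assume h: "0 < p1" "p1 \<le> c" "d \<le> p2" "p2 \<le> K" "a > 0"
      have "p1 powr a * p2 powr b \<le> p1 powr a * B" using bnd[OF h(3,4)] h by (intro mult_left_mono) auto
      also have "\<dots> < \<kappa>/B * B" using c h Bp by (intro mult_strict_right_mono) auto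
      finally show "p1 powr a * p2 powr b < \<kappa>" using Bp by simp
    qed (use c True in auto)
  next
    case False
    then have "a < 0" using assms by auto
    obtain c where c: "c>0" "\<forall>s. 0 < s \<longrightarrow> s \<le> c \<longrightarrow> s powr a > \<kappa>/bb"
      using big_pow[OF \<open>a < 0\<close>, of "\<kappa>/bb"] assms Bp by auto
    show ?thesis
    proof (intro exI[of _ c] conjI allI impI)
      fix p1 p2 :: real assume h: "0 < p1" "p1 \<le> c" "d \<le> p2" "p2 \<le> K" "a < 0"
      have "\<kappa> = \<kappa>/bb * bb" using Bp by simp
      also have "\<dots> < p1 powr a * bb" using c h Bp by (intro mult_strict_right_mono) auto
      also have "\<dots> \<le> p1 powr a * p2 powr b" using bnd[OF h(3,4)] h by (intro mult_left_mono) auto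
      finally show "p1 powr a * p2 powr b > \<kappa>" .
    qed (use c False in auto)
  qed
qed


definition definite :: "real \<Rightarrow> real \<Rightarrow> bool" where
  "definite a b \<longleftrightarrow> (a \<ge> 0 \<and> b \<ge> 0 \<and> (a > 0 \<or> b > 0)) \<or> (a \<le> 0 \<and> b \<le> 0 \<and> (a < 0 \<or> b < 0))"

locale traj =
  fixes X Y R1 R2 :: "real \<Rightarrow> real" and \<alpha>1 \<beta>1 \<alpha>2 \<beta>2 \<kappa>1 \<kappa>2 :: real
  assumes posX: "\<And>t. t \<ge> 0 \<Longrightarrow> X t > 0" and posY: "\<And>t. t \<ge> 0 \<Longrightarrow> Y t > 0"
    and dX: "\<And>t. t \<ge> 0 \<Longrightarrow> (X has_real_derivative (R1 t * \<alpha>1 + R2 t * \<alpha>2)) (at t within {0..})"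
    and dY: "\<And>t. t \<ge> 0 \<Longrightarrow> (Y has_real_derivative (R1 t * \<beta>1 + R2 t * \<beta>2)) (at t within {0..})"
    and s1lt: "\<And>t. t \<ge> 0 \<Longrightarrow> X t powr \<alpha>1 * Y t powr \<beta>1 < \<kappa>1 \<Longrightarrow> R1 t > 0"
    and s1gt: "\<And>t. t \<ge> 0 \<Longrightarrow> X t powr \<alpha>1 * Y t powr \<beta>1 > \<kappa>1 \<Longrightarrow> R1 t < 0"
    and s2lt: "\<And>t. t \<ge> 0 \<Longrightarrow> X t powr \<alpha>2 * Y t powr \<beta>2 < \<kappa>2 \<Longrightarrow> R2 t > 0"
    and s2gt: "\<And>t. t \<ge> 0 \<Longrightarrow> X t powr \<alpha>2 * Y t powr \<beta>2 > \<kappa>2 \<Longrightarrow> R2 t < 0"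
    and kpos: "\<kappa>1 > 0" "\<kappa>2 > 0"
begin

lemma swap_reac: "traj X Y R2 R1 \<alpha>2 \<beta>2 \<alpha>1 \<beta>1 \<kappa>2 \<kappa>1"
proof (unfold_locales)
  fix t :: real assume t: "t \<ge> 0"
  show "X t > 0" by (rule posX[OF t])
  show "Y t > 0" by (rule posY[OF t])
  show "(X has_real_derivative R2 t * \<alpha>2 + R1 t * \<alpha>1) (at t within {0..})"
    using dX[OF t] by (simp only: add.commute)
  show "(Y has_real_derivative R2 t * \<beta>2 + R1 t * \<beta>1) (at t within {0..})"
    using dY[OF t] by (simp only: add.commute)
  show "X t powr \<alpha>2 * Y t powr \<beta>2 < \<kappa>2 \<Longrightarrow> R2 t > 0" by (rule s2lt[OF t])
  show "X t powr \<alpha>2 * Y t powr \<beta>2 > \<kappa>2 \<Longrightarrow> R2 t < 0" by (rule s2gt[OF t])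
  show "X t powr \<alpha>1 * Y t powr \<beta>1 < \<kappa>1 \<Longrightarrow> R1 t > 0" by (rule s1lt[OF t])
  show "X t powr \<alpha>1 * Y t powr \<beta>1 > \<kappa>1 \<Longrightarrow> R1 t < 0" by (rule s1gt[OF t])
next
  show "\<kappa>2 > 0" "\<kappa>1 > 0" by (rule kpos(2), rule kpos(1))
qed

lemma swap_coord: "traj Y X R1 R2 \<beta>1 \<alpha>1 \<beta>2 \<alpha>2 \<kappa>1 \<kappa>2"
proof (unfold_locales)
  fix t :: real assume t: "t \<ge> 0"
  have c1: "Y t powr \<beta>1 * X t powr \<alpha>1 = X t powr \<alpha>1 * Y t powr \<beta>1" by (rule mult.commute)
  have c2: "Y t powr \<beta>2 * X t powr \<alpha>2 = X t powr \<alpha>2 * Y t powr \<beta>2" by (rule mult.commute)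
  show "Y t > 0" by (rule posY[OF t])
  show "X t > 0" by (rule posX[OF t])
  show "(Y has_real_derivative R1 t * \<beta>1 + R2 t * \<beta>2) (at t within {0..})" by (rule dY[OF t])
  show "(X has_real_derivative R1 t * \<alpha>1 + R2 t * \<alpha>2) (at t within {0..})" by (rule dX[OF t])
  show "Y t powr \<beta>1 * X t powr \<alpha>1 < \<kappa>1 \<Longrightarrow> R1 t > 0" using s1lt[OF t] unfolding c1 .
  show "Y t powr \<beta>1 * X t powr \<alpha>1 > \<kappa>1 \<Longrightarrow> R1 t < 0" using s1gt[OF t] unfolding c1 .
  show "Y t powr \<beta>2 * X t powr \<alpha>2 < \<kappa>2 \<Longrightarrow> R2 t > 0" using s2lt[OF t] unfolding c2 .
  show "Y t powr \<beta>2 * X t powr \<alpha>2 > \<kappa>2 \<Longrightarrow> R2 t < 0" using s2gt[OF t] unfolding c2 .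
next
  show "\<kappa>1 > 0" "\<kappa>2 > 0" by (rule kpos(1), rule kpos(2))
qed

lemma dN: "t \<ge> 0 \<Longrightarrow> ((\<lambda>t. n1 * X t + n2 * Y t - c) has_real_derivative
   (R1 t * (n1*\<alpha>1 + n2*\<beta>1) + R2 t * (n1*\<alpha>2 + n2*\<beta>2))) (at t within {0..})"
proof -
  assume t: "t \<ge> 0"
  have "((\<lambda>t. n1 * X t + n2 * Y t - c) has_real_derivative
   (n1 * (R1 t * \<alpha>1 + R2 t * \<alpha>2) + n2 * (R1 t * \<beta>1 + R2 t * \<beta>2) - 0)) (at t within {0..})"
    by (rule DERIV_diff[OF DERIV_add[OF DERIV_cmult[OF dX[OF t]] DERIV_cmult[OF dY[OF t]]] DERIV_const])
  then show ?thesis by (rule DERIV_cong) (simp add: algebra_simps)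
qed

lemma invariance1:
  fixes f f' :: "real \<Rightarrow> real"
  assumes df: "\<And>t. t \<ge> 0 \<Longrightarrow> (f has_real_derivative f' t) (at t within {0..})"
    and f0: "f 0 \<ge> 0"
    and ff: "\<And>t. t \<ge> 0 \<Longrightarrow> f t = 0 \<Longrightarrow> f' t > 0"
  shows "\<forall>t\<ge>0. f t \<ge> 0"
proof -
  have dg: "\<And>t. t \<ge> 0 \<Longrightarrow> ((\<lambda>_. 1::real) has_real_derivative 0) (at t within {0..})"
    by (rule DERIV_const)
  have "\<forall>t\<ge>0. f t \<ge> 0 \<and> (\<lambda>_. 1::real) t \<ge> 0"
  proof (rule invariance2[OF df dg f0])
    show "(0::real) \<le> 1" by simp
    show "\<And>t. 0 \<le> t \<Longrightarrow> f t = 0 \<Longrightarrow> 0 \<le> (1::real) \<Longrightarrow> 0 < f' t" using ff by blast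
    show "\<And>t. 0 \<le> t \<Longrightarrow> (1::real) = 0 \<Longrightarrow> 0 \<le> f t \<Longrightarrow> 0 < (0::real)" by simp
  qed
  then show ?thesis by blast
qed

lemma term_pos:
  assumes "definite \<alpha>1 \<beta>1" "n1 > 0" "n2 > 0"
  shows "\<exists>c>0. \<forall>t\<ge>0. n1 * X t + n2 * Y t \<le> c \<longrightarrow> R1 t * (n1*\<alpha>1 + n2*\<beta>1) > 0"
proof -
  have scale: "0 < X t \<and> X t \<le> c \<and> 0 < Y t \<and> Y t \<le> c"
    if "t \<ge> 0" "n1 * X t + n2 * Y t \<le> c * min n1 n2" "c > 0" for t c
  proof -
    have "X t > 0" "Y t > 0" using posX posY that by auto
    have "n1 * X t \<le> c * min n1 n2" using that \<open>Y t > 0\<close> assms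
      by (smt (verit) mult_pos_pos)
    also have "\<dots> \<le> c * n1" using that by (intro mult_left_mono) auto
    finally have "n1 * X t \<le> c * n1" .
    then have "X t \<le> c" using assms by (simp add: mult.commute)
    have "n2 * Y t \<le> c * min n1 n2" using that \<open>X t > 0\<close> assms
      by (smt (verit) mult_pos_pos)
    also have "\<dots> \<le> c * n2" using that by (intro mult_left_mono) auto
    finally have "n2 * Y t \<le> c * n2" .
    then have "Y t \<le> c" using assms by (simp add: mult.commute)
    show ?thesis using \<open>X t \<le> c\<close> \<open>Y t \<le> c\<close> \<open>X t > 0\<close> \<open>Y t > 0\<close> by auto
  qed
  consider "\<alpha>1 \<ge> 0 \<and> \<beta>1 \<ge> 0 \<and> (\<alpha>1 > 0 \<or> \<beta>1 > 0)" | "\<alpha>1 \<le> 0 \<and> \<beta>1 \<le> 0 \<and> (\<alpha>1 < 0 \<or> \<beta>1 < 0)"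
    using assms(1) unfolding definite_def by auto
  then show ?thesis
  proof cases
    case 1
    obtain c where c: "c>0" "\<forall>p1 p2. 0 < p1 \<longrightarrow> p1 \<le> c \<longrightarrow> 0 < p2 \<longrightarrow> p2 \<le> c \<longrightarrow> p1 powr \<alpha>1 * p2 powr \<beta>1 < \<kappa>1"
      using mono_small[of \<alpha>1 \<beta>1 \<kappa>1] 1 kpos by auto
    have coef: "n1*\<alpha>1 + n2*\<beta>1 > 0" using 1 assms by (smt (verit) mult_pos_pos mult_nonneg_nonneg)
    show ?thesis
    proof (intro exI[of _ "c * min n1 n2"] conjI allI impI)
      show "c * min n1 n2 > 0" using c assms by simp
      fix t :: real assume "t \<ge> 0" "n1 * X t + n2 * Y t \<le> c * min n1 n2"
      then have "0 < X t \<and> X t \<le> c \<and> 0 < Y t \<and> Y t \<le> c" using scale[OF _ _ c(1)] by blast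
      then have "X t powr \<alpha>1 * Y t powr \<beta>1 < \<kappa>1" using c(2) by blast
      then have "R1 t > 0" using s1lt \<open>t \<ge> 0\<close> by blast
      then show "R1 t * (n1*\<alpha>1 + n2*\<beta>1) > 0" using coef by simp
    qed
  next
    case 2
    obtain c where c: "c>0" "\<forall>p1 p2. 0 < p1 \<longrightarrow> p1 \<le> c \<longrightarrow> 0 < p2 \<longrightarrow> p2 \<le> c \<longrightarrow> p1 powr \<alpha>1 * p2 powr \<beta>1 > \<kappa>1"
      using mono_big[of \<alpha>1 \<beta>1 \<kappa>1] 2 kpos by auto
    have coef: "n1*\<alpha>1 + n2*\<beta>1 < 0" using 2 assms
      by (smt (verit) mult_pos_neg mult_nonneg_nonpos)
    show ?thesis
    proof (intro exI[of _ "c * min n1 n2"] conjI allI impI)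
      show "c * min n1 n2 > 0" using c assms by simp
      fix t :: real assume "t \<ge> 0" "n1 * X t + n2 * Y t \<le> c * min n1 n2"
      then have "0 < X t \<and> X t \<le> c \<and> 0 < Y t \<and> Y t \<le> c" using scale[OF _ _ c(1)] by blast
      then have "X t powr \<alpha>1 * Y t powr \<beta>1 > \<kappa>1" using c(2) by blast
      then have "R1 t < 0" using s1gt \<open>t \<ge> 0\<close> by blast
      then show "R1 t * (n1*\<alpha>1 + n2*\<beta>1) > 0" using coef by (simp add: mult_neg_neg)
    qed
  qed
qed

end

lemma (in traj) term_pos2:
  assumes "definite \<alpha>2 \<beta>2" "n1 > 0" "n2 > 0"
  shows "\<exists>c>0. \<forall>t\<ge>0. n1 * X t + n2 * Y t \<le> c \<longrightarrow> R2 t * (n1*\<alpha>2 + n2*\<beta>2) > 0"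
  using traj.term_pos[OF swap_reac assms] .

lemma (in traj) corner1:
  assumes n: "n1 > 0" "n2 > 0"
    and H1: "n1*\<alpha>1 + n2*\<beta>1 = 0 \<or> definite \<alpha>1 \<beta>1"
    and H2: "n1*\<alpha>2 + n2*\<beta>2 = 0 \<or> definite \<alpha>2 \<beta>2"
    and H: "definite \<alpha>1 \<beta>1 \<or> definite \<alpha>2 \<beta>2"
  shows "\<exists>c>0. \<forall>t\<ge>0. n1 * X t + n2 * Y t \<ge> c"
proof -
  obtain c1 where c1: "c1 > 0" "\<forall>t\<ge>0. n1 * X t + n2 * Y t \<le> c1 \<longrightarrow> R1 t * (n1*\<alpha>1 + n2*\<beta>1) \<ge> 0 \<and>
      (definite \<alpha>1 \<beta>1 \<longrightarrow> R1 t * (n1*\<alpha>1 + n2*\<beta>1) > 0)"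
  proof (cases "definite \<alpha>1 \<beta>1")
    case True
    obtain c where c: "c>0" "\<forall>t\<ge>0. n1 * X t + n2 * Y t \<le> c \<longrightarrow> R1 t * (n1*\<alpha>1 + n2*\<beta>1) > 0"
      using term_pos[OF True n] by blast
    show ?thesis by (rule that[of c]) (use c in \<open>auto simp: less_imp_le\<close>)
  next
    case False
    then show ?thesis using H1 that[of 1] by auto
  qed
  obtain c2 where c2: "c2 > 0" "\<forall>t\<ge>0. n1 * X t + n2 * Y t \<le> c2 \<longrightarrow> R2 t * (n1*\<alpha>2 + n2*\<beta>2) \<ge> 0 \<and>
      (definite \<alpha>2 \<beta>2 \<longrightarrow> R2 t * (n1*\<alpha>2 + n2*\<beta>2) > 0)"
  proof (cases "definite \<alpha>2 \<beta>2")
    case True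
    obtain c where c: "c>0" "\<forall>t\<ge>0. n1 * X t + n2 * Y t \<le> c \<longrightarrow> R2 t * (n1*\<alpha>2 + n2*\<beta>2) > 0"
      using term_pos2[OF True n] by blast
    show ?thesis by (rule that[of c]) (use c in \<open>auto simp: less_imp_le\<close>)
  next
    case False
    then show ?thesis using H2 that[of 1] by auto
  qed
  define c where "c = min (min c1 c2) (n1 * X 0 + n2 * Y 0)"
  have "c > 0" unfolding c_def using c1 c2 n posX[of 0] posY[of 0] by (simp add: add_pos_pos)
  have "\<forall>t\<ge>0. n1 * X t + n2 * Y t - c \<ge> 0"
  proof (rule invariance1[OF dN])
    show "n1 * X 0 + n2 * Y 0 - c \<ge> 0" unfolding c_def by simp
    fix t :: real assume "t \<ge> 0" "n1 * X t + n2 * Y t - c = 0"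
    then have "n1 * X t + n2 * Y t \<le> c1" "n1 * X t + n2 * Y t \<le> c2" unfolding c_def by auto
    then show "R1 t * (n1*\<alpha>1 + n2*\<beta>1) + R2 t * (n1*\<alpha>2 + n2*\<beta>2) > 0"
    proof -
      have A1: "R1 t * (n1*\<alpha>1 + n2*\<beta>1) \<ge> 0" "definite \<alpha>1 \<beta>1 \<longrightarrow> R1 t * (n1*\<alpha>1 + n2*\<beta>1) > 0"
        using c1(2) \<open>t \<ge> 0\<close> \<open>n1 * X t + n2 * Y t \<le> c1\<close> by auto
      have A2: "R2 t * (n1*\<alpha>2 + n2*\<beta>2) \<ge> 0" "definite \<alpha>2 \<beta>2 \<longrightarrow> R2 t * (n1*\<alpha>2 + n2*\<beta>2) > 0"
        using c2(2) \<open>t \<ge> 0\<close> \<open>n1 * X t + n2 * Y t \<le> c2\<close> by auto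
      show ?thesis using A1 A2 H by auto
    qed
  qed
  then show ?thesis using \<open>c > 0\<close> by (intro exI[of _ c]) auto
qed


lemma (in traj) edge_term:
  assumes "0 < d" "d \<le> K"
  shows "\<exists>e>0. \<forall>t\<ge>0. X t \<le> e \<longrightarrow> d \<le> Y t \<longrightarrow> Y t \<le> K \<longrightarrow> R1 t * \<alpha>1 \<ge> 0 \<and> (\<alpha>1 \<noteq> 0 \<longrightarrow> R1 t * \<alpha>1 > 0)"
proof (cases "\<alpha>1 = 0")
  case True
  then show ?thesis by (intro exI[of _ 1]) auto
next
  case False
  obtain e where e: "e>0" "\<forall>p1 p2. 0 < p1 \<longrightarrow> p1 \<le> e \<longrightarrow> d \<le> p2 \<longrightarrow> p2 \<le> K \<longrightarrow>
     (\<alpha>1 > 0 \<longrightarrow> p1 powr \<alpha>1 * p2 powr \<beta>1 < \<kappa>1) \<and> (\<alpha>1 < 0 \<longrightarrow> p1 powr \<alpha>1 * p2 powr \<beta>1 > \<kappa>1)"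
    using edge_mono[OF False kpos(1) assms] by blast
  show ?thesis
  proof (intro exI[of _ e] conjI allI impI)
    fix t :: real assume h: "t \<ge> 0" "X t \<le> e" "d \<le> Y t" "Y t \<le> K"
    have "\<alpha>1 > 0 \<longrightarrow> R1 t > 0" "\<alpha>1 < 0 \<longrightarrow> R1 t < 0"
      using e(2)[rule_format, OF posX[OF h(1)] h(2-4)] s1lt[OF h(1)] s1gt[OF h(1)] by auto
    then show "R1 t * \<alpha>1 > 0" "R1 t * \<alpha>1 \<ge> 0" using False
      by (auto simp: mult_neg_neg zero_less_mult_iff) (smt (verit) mult_neg_neg mult_pos_pos)+
  qed (use e in auto)
qed

lemma (in traj) edge:
  assumes A: "\<alpha>1 \<noteq> 0 \<or> \<alpha>2 \<noteq> 0" and K: "K > 0" "\<And>t. t \<ge> 0 \<Longrightarrow> Y t \<le> K"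
    and n: "n1 > 0" "n2 > 0" "c > 0" "\<And>t. t \<ge> 0 \<Longrightarrow> n1 * X t + n2 * Y t \<ge> c"
  shows "\<exists>\<delta>>0. \<forall>t\<ge>0. X t \<ge> \<delta>"
proof -
  define d where "d = min (c/(2*n2)) K"
  have d: "0 < d" "d \<le> K" unfolding d_def using n K by auto
  obtain e1 where e1: "e1>0" "\<forall>t\<ge>0. X t \<le> e1 \<longrightarrow> d \<le> Y t \<longrightarrow> Y t \<le> K \<longrightarrow> R1 t * \<alpha>1 \<ge> 0 \<and> (\<alpha>1 \<noteq> 0 \<longrightarrow> R1 t * \<alpha>1 > 0)"
    using edge_term[OF d] by blast
  obtain e2 where e2: "e2>0" "\<forall>t\<ge>0. X t \<le> e2 \<longrightarrow> d \<le> Y t \<longrightarrow> Y t \<le> K \<longrightarrow> R2 t * \<alpha>2 \<ge> 0 \<and> (\<alpha>2 \<noteq> 0 \<longrightarrow> R2 t * \<alpha>2 > 0)"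
    using traj.edge_term[OF swap_reac d] by blast
  define \<delta> where "\<delta> = min (min e1 e2) (min (c/(2*n1)) (X 0))"
  have "\<delta> > 0" unfolding \<delta>_def using e1 e2 n posX[of 0] by auto
  have "\<forall>t\<ge>0. X t - \<delta> \<ge> 0"
  proof (rule invariance1)
    show "\<And>t. t \<ge> 0 \<Longrightarrow> ((\<lambda>t. X t - \<delta>) has_real_derivative (R1 t * \<alpha>1 + R2 t * \<alpha>2)) (at t within {0..})"
      using dX by (auto intro!: derivative_eq_intros)
    show "X 0 - \<delta> \<ge> 0" unfolding \<delta>_def by simp
    fix t :: real assume t: "t \<ge> 0" "X t - \<delta> = 0"
    then have "X t \<le> e1" "X t \<le> e2" "X t \<le> c/(2*n1)" unfolding \<delta>_def by auto
    then have "n1 * X t \<le> c/2" using n by (simp add: field_simps)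
    then have "n2 * Y t \<ge> c/2" using n(4)[OF t(1)] by simp
    then have "Y t \<ge> c/(2*n2)" using n by (simp add: field_simps)
    then have "d \<le> Y t" unfolding d_def by simp
    then show "R1 t * \<alpha>1 + R2 t * \<alpha>2 > 0"
      using e1(2) e2(2) t(1) \<open>X t \<le> e1\<close> \<open>X t \<le> e2\<close> K(2)[OF t(1)] A by (smt (verit))
  qed
  then show ?thesis using \<open>\<delta> > 0\<close> by (intro exI[of _ \<delta>]) auto
qed


lemma cond_pow:
  fixes e \<kappa> :: real
  assumes "e \<noteq> 0" "\<kappa> > 0"
  shows "\<exists>c>0. \<forall>s. 0 < s \<longrightarrow> s \<le> c \<longrightarrow> (e > 0 \<longrightarrow> s powr e < \<kappa>) \<and> (e < 0 \<longrightarrow> s powr e > \<kappa>)"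
proof (cases "e > 0")
  case True
  then show ?thesis using small_pow[OF True assms(2)] by auto
next
  case False
  then have "e < 0" using assms by auto
  then show ?thesis using big_pow[OF \<open>e<0\<close> assms(2)] by auto
qed

lemma mono_le:
  fixes x x' y y' :: real
  assumes "x powr a \<le> x' powr a" "y powr b \<le> y' powr b"
  shows "x powr a * y powr b \<le> x' powr a * y' powr b"
  using assms by (intro mult_mono) auto

lemma mono_cmp:
  fixes x x' y y' a b :: real
  assumes "0 < x" "0 < x'" "0 < y" "0 < y'" "x \<le> x'" "y' \<le> y" "a \<ge> 0" "b \<le> 0"
  shows "x powr a * y powr b \<le> x' powr a * y' powr b"
proof -
  have "x powr a \<le> x' powr a" using assms by (intro powr_mono2) auto
  moreover have "y powr b \<le> y' powr b" using assms by (intro powr_mono2') auto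
  ultimately show ?thesis by (rule mono_le)
qed

lemma (in traj) corner3:
  assumes m1: "\<alpha>1 * \<beta>1 < 0" and m2: "\<alpha>2 * \<beta>2 < 0" and g: "\<bar>\<alpha>1\<bar> * \<bar>\<beta>2\<bar> < \<bar>\<alpha>2\<bar> * \<bar>\<beta>1\<bar>"
  shows "\<exists>c>0. \<forall>t\<ge>0. \<bar>\<beta>1\<bar> * X t + \<bar>\<alpha>1\<bar> * Y t \<ge> c"
proof -
  define a1 where "a1 = \<bar>\<alpha>1\<bar>"
  define b1 where "b1 = \<bar>\<beta>1\<bar>"
  define a2 where "a2 = \<bar>\<alpha>2\<bar>"
  define b2 where "b2 = \<bar>\<beta>2\<bar>"
  have pos: "a1 > 0" "b1 > 0" "a2 > 0" "b2 > 0" using m1 m2 unfolding a1_def b1_def a2_def b2_def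
    by (auto simp: mult_less_0_iff)
  have g': "a1 * b2 < a2 * b1" using g unfolding a1_def b1_def a2_def b2_def .
  have z1: "b1 * \<alpha>1 + a1 * \<beta>1 = 0" using m1 unfolding a1_def b1_def by (auto simp: mult_less_0_iff)
  have z2: "b2 * \<alpha>2 + a2 * \<beta>2 = 0" using m2 unfolding a2_def b2_def by (auto simp: mult_less_0_iff)
  have sg1: "(\<beta>1 > 0 \<and> \<alpha>1 = -a1 \<and> \<beta>1 = b1) \<or> (\<beta>1 < 0 \<and> \<alpha>1 = a1 \<and> \<beta>1 = -b1)"
    using m1 unfolding a1_def b1_def by (auto simp: mult_less_0_iff)
  have sg2: "(\<alpha>2 > 0 \<and> \<alpha>2 = a2 \<and> \<beta>2 = -b2) \<or> (\<alpha>2 < 0 \<and> \<alpha>2 = -a2 \<and> \<beta>2 = b2)"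
    using m2 unfolding a2_def b2_def by (auto simp: mult_less_0_iff)
  define \<mu>1 where "\<mu>1 = 2 * b1 * b2"
  define \<mu>2 where "\<mu>2 = a1 * b2 + a2 * b1"
  have mu: "\<mu>1 > 0" "\<mu>2 > 0" unfolding \<mu>1_def \<mu>2_def using pos by (auto simp: add_pos_pos)
  define e1 where "e1 = \<mu>1 * \<alpha>1 + \<mu>2 * \<beta>1"
  define e2 where "e2 = \<mu>1 * \<alpha>2 + \<mu>2 * \<beta>2"
  have e1v: "e1 = (if \<beta>1 > 0 then 1 else -1) * (b1 * (a2 * b1 - a1 * b2))"
    using sg1 unfolding e1_def \<mu>1_def \<mu>2_def by (auto simp: algebra_simps)
  have e2v: "e2 = (if \<alpha>2 > 0 then 1 else -1) * (b2 * (a2 * b1 - a1 * b2))"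
    using sg2 unfolding e2_def \<mu>1_def \<mu>2_def by (auto simp: algebra_simps)
  have pp: "b1 * (a2 * b1 - a1 * b2) > 0" "b2 * (a2 * b1 - a1 * b2) > 0" using pos g' by auto
  have e1s: "\<beta>1 > 0 \<longrightarrow> e1 > 0" "\<beta>1 < 0 \<longrightarrow> e1 < 0" using e1v pp by auto
  have e2s: "\<alpha>2 > 0 \<longrightarrow> e2 > 0" "\<alpha>2 < 0 \<longrightarrow> e2 < 0" using e2v pp by auto
  have "e1 \<noteq> 0" using e1v pp by auto
  have "e2 \<noteq> 0" using e2v pp by auto
  define N10 where "N10 = b1 * X 0 + a1 * Y 0"
  define N20 where "N20 = b2 * X 0 + a2 * Y 0"
  have N0pos: "N10 > 0" "N20 > 0" unfolding N10_def N20_def using pos posX[of 0] posY[of 0] by (auto simp: add_pos_pos)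
  define \<rho> where "\<rho> = min N10 N20 / (a1 + b1 + a2 + b2)"
  have "\<rho> > 0" unfolding \<rho>_def using N0pos pos by auto
  obtain c1 where c1: "c1>0" "\<forall>s. 0 < s \<longrightarrow> s \<le> c1 \<longrightarrow> (e1 > 0 \<longrightarrow> s powr e1 < \<kappa>1) \<and> (e1 < 0 \<longrightarrow> s powr e1 > \<kappa>1)"
    using cond_pow[OF \<open>e1 \<noteq> 0\<close> kpos(1)] by blast
  obtain c2 where c2: "c2>0" "\<forall>s. 0 < s \<longrightarrow> s \<le> c2 \<longrightarrow> (e2 > 0 \<longrightarrow> s powr e2 < \<kappa>2) \<and> (e2 < 0 \<longrightarrow> s powr e2 > \<kappa>2)"
    using cond_pow[OF \<open>e2 \<noteq> 0\<close> kpos(2)] by blast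
  obtain c3 where c3: "c3>0" "\<forall>s. 0 < s \<longrightarrow> s \<le> c3 \<longrightarrow> s powr \<mu>1 < \<rho>"
    using small_pow[OF mu(1) \<open>\<rho> > 0\<close>] by blast
  obtain c4 where c4: "c4>0" "\<forall>s. 0 < s \<longrightarrow> s \<le> c4 \<longrightarrow> s powr \<mu>2 < \<rho>"
    using small_pow[OF mu(2) \<open>\<rho> > 0\<close>] by blast
  define s where "s = min (min c1 c2) (min c3 c4)"
  have "s > 0" unfolding s_def using c1 c2 c3 c4 by auto
  define P1 where "P1 = s powr \<mu>1"
  define P2 where "P2 = s powr \<mu>2"
  have Ppos: "P1 > 0" "P2 > 0" unfolding P1_def P2_def using \<open>s > 0\<close> by auto
  have P\<rho>: "P1 < \<rho>" "P2 < \<rho>" unfolding P1_def P2_def using c3 c4 \<open>s > 0\<close> unfolding s_def by auto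
  have mP1: "P1 powr \<alpha>1 * P2 powr \<beta>1 = s powr e1"
    unfolding P1_def P2_def e1_def by (simp add: powr_powr powr_add)
  have mP2: "P1 powr \<alpha>2 * P2 powr \<beta>2 = s powr e2"
    unfolding P1_def P2_def e2_def by (simp add: powr_powr powr_add)
  have k1c: "(\<beta>1 > 0 \<longrightarrow> P1 powr \<alpha>1 * P2 powr \<beta>1 < \<kappa>1) \<and> (\<beta>1 < 0 \<longrightarrow> P1 powr \<alpha>1 * P2 powr \<beta>1 > \<kappa>1)"
    unfolding mP1 using c1(2)[rule_format, of s] \<open>s > 0\<close> e1s unfolding s_def by auto
  have k2c: "(\<alpha>2 > 0 \<longrightarrow> P1 powr \<alpha>2 * P2 powr \<beta>2 < \<kappa>2) \<and> (\<alpha>2 < 0 \<longrightarrow> P1 powr \<alpha>2 * P2 powr \<beta>2 > \<kappa>2)"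
    unfolding mP2 using c2(2)[rule_format, of s] \<open>s > 0\<close> e2s unfolding s_def by auto
  define C1 where "C1 = b1 * P1 + a1 * P2"
  define C2 where "C2 = b2 * P1 + a2 * P2"
  have C1pos: "C1 > 0" unfolding C1_def using pos Ppos by (simp add: add_pos_pos)
  have C1le: "C1 \<le> N10"
  proof -
    have "C1 \<le> b1 * \<rho> + a1 * \<rho>" unfolding C1_def using P\<rho> pos
      by (intro add_mono mult_left_mono) auto
    also have "\<dots> = (a1 + b1) * \<rho>" by (simp add: algebra_simps)
    also have "\<dots> \<le> (a1 + b1 + a2 + b2) * \<rho>" using pos \<open>\<rho> > 0\<close> by (intro mult_right_mono) auto
    also have "\<dots> = min N10 N20" unfolding \<rho>_def using pos by simp
    finally show ?thesis by simp
  qed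
  have C2le: "C2 \<le> N20"
  proof -
    have "C2 \<le> b2 * \<rho> + a2 * \<rho>" unfolding C2_def using P\<rho> pos
      by (intro add_mono mult_left_mono) auto
    also have "\<dots> = (a2 + b2) * \<rho>" by (simp add: algebra_simps)
    also have "\<dots> \<le> (a1 + b1 + a2 + b2) * \<rho>" using pos \<open>\<rho> > 0\<close> by (intro mult_right_mono) auto
    also have "\<dots> = min N10 N20" unfolding \<rho>_def using pos by simp
    finally show ?thesis by simp
  qed
  have inv: "\<forall>t\<ge>0. b1 * X t + a1 * Y t - C1 \<ge> 0 \<and> b2 * X t + a2 * Y t - C2 \<ge> 0"
  proof (rule invariance2[OF dN dN])
    show "b1 * X 0 + a1 * Y 0 - C1 \<ge> 0" using C1le unfolding N10_def by simp
    show "b2 * X 0 + a2 * Y 0 - C2 \<ge> 0" using C2le unfolding N20_def by simp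
  next
    fix t :: real assume t: "t \<ge> 0" "b1 * X t + a1 * Y t - C1 = 0" "b2 * X t + a2 * Y t - C2 \<ge> 0"
    define u where "u = X t - P1"
    define w where "w = Y t - P2"
    have eq: "b1 * u + a1 * w = 0" using t(2) unfolding u_def w_def C1_def by (simp add: algebra_simps)
    have ge: "b2 * u + a2 * w \<ge> 0" using t(3) unfolding u_def w_def C2_def by (simp add: algebra_simps)
    have "a1 * (b2 * u + a2 * w) \<ge> 0" using ge pos by simp
    moreover have "a1 * (b2 * u + a2 * w) = u * (a1 * b2 - a2 * b1)"
    proof -
      have "a1 * w = - b1 * u" using eq by simp
      then have "a1 * a2 * w = - a2 * b1 * u" by (metis mult.assoc mult.commute mult_minus_left)
      then show ?thesis by (simp add: algebra_simps)
    qed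
    ultimately have "0 \<le> u * (a1 * b2 - a2 * b1)" by simp
    moreover have "a1 * b2 - a2 * b1 < 0" using g' by simp
    ultimately have "u \<le> 0" by (meson mult_pos_neg not_le)
    have "b1 * u \<le> 0" using \<open>u \<le> 0\<close> pos by (simp add: mult_nonneg_nonpos)
    then have "a1 * w \<ge> 0" using eq by linarith
    then have "w \<ge> 0" using pos by (simp add: zero_le_mult_iff)
    have XP: "X t \<le> P1" "Y t \<ge> P2" using \<open>u \<le> 0\<close> \<open>w \<ge> 0\<close> unfolding u_def w_def by auto
    have Xp: "X t > 0" "Y t > 0" using posX posY t by auto
    show "R1 t * (b1 * \<alpha>1 + a1 * \<beta>1) + R2 t * (b1 * \<alpha>2 + a1 * \<beta>2) > 0"
      using sg2
    proof
      assume h: "\<alpha>2 > 0 \<and> \<alpha>2 = a2 \<and> \<beta>2 = - b2"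
      have "X t powr \<alpha>2 * Y t powr \<beta>2 \<le> P1 powr \<alpha>2 * P2 powr \<beta>2"
        using h XP Xp Ppos pos by (intro mono_cmp) auto
      then have "R2 t > 0" using k2c h s2lt[OF t(1)] by auto
      moreover have "b1 * \<alpha>2 + a1 * \<beta>2 > 0" using h g' by (simp add: algebra_simps)
      ultimately show ?thesis using z1 by simp
    next
      assume h: "\<alpha>2 < 0 \<and> \<alpha>2 = - a2 \<and> \<beta>2 = b2"
      have "P2 powr \<beta>2 * P1 powr \<alpha>2 \<le> Y t powr \<beta>2 * X t powr \<alpha>2"
        using h XP Xp Ppos pos by (intro mono_cmp) auto
      then have "P1 powr \<alpha>2 * P2 powr \<beta>2 \<le> X t powr \<alpha>2 * Y t powr \<beta>2" by (simp add: mult.commute)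
      then have "R2 t < 0" using k2c h s2gt[OF t(1)] by auto
      moreover have "b1 * \<alpha>2 + a1 * \<beta>2 < 0" using h g' by (simp add: algebra_simps)
      ultimately show ?thesis using z1 by (simp add: mult_neg_neg)
    qed
  next
    fix t :: real assume t: "t \<ge> 0" "b2 * X t + a2 * Y t - C2 = 0" "b1 * X t + a1 * Y t - C1 \<ge> 0"
    define u where "u = X t - P1"
    define w where "w = Y t - P2"
    have eq: "b2 * u + a2 * w = 0" using t(2) unfolding u_def w_def C2_def by (simp add: algebra_simps)
    have ge: "b1 * u + a1 * w \<ge> 0" using t(3) unfolding u_def w_def C1_def by (simp add: algebra_simps)
    have "b2 * (b1 * u + a1 * w) \<ge> 0" using ge pos by simp
    moreover have "b2 * (b1 * u + a1 * w) = w * (a1 * b2 - a2 * b1)"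
    proof -
      have "b2 * u = - a2 * w" using eq by simp
      then have "b1 * b2 * u = - a2 * b1 * w" by (metis mult.assoc mult.commute mult_minus_left)
      then show ?thesis by (simp add: algebra_simps)
    qed
    ultimately have "0 \<le> w * (a1 * b2 - a2 * b1)" by simp
    moreover have "a1 * b2 - a2 * b1 < 0" using g' by simp
    ultimately have "w \<le> 0" by (meson mult_pos_neg not_le)
    have "a2 * w \<le> 0" using \<open>w \<le> 0\<close> pos by (simp add: mult_nonneg_nonpos)
    then have "b2 * u \<ge> 0" using eq by linarith
    then have "u \<ge> 0" using pos by (simp add: zero_le_mult_iff)
    have XP: "X t \<ge> P1" "Y t \<le> P2" using \<open>u \<ge> 0\<close> \<open>w \<le> 0\<close> unfolding u_def w_def by auto
    have Xp: "X t > 0" "Y t > 0" using posX posY t by auto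
    show "R1 t * (b2 * \<alpha>1 + a2 * \<beta>1) + R2 t * (b2 * \<alpha>2 + a2 * \<beta>2) > 0"
      using sg1
    proof
      assume h: "\<beta>1 > 0 \<and> \<alpha>1 = - a1 \<and> \<beta>1 = b1"
      have "Y t powr \<beta>1 * X t powr \<alpha>1 \<le> P2 powr \<beta>1 * P1 powr \<alpha>1"
        using h XP Xp Ppos pos by (intro mono_cmp) auto
      then have "X t powr \<alpha>1 * Y t powr \<beta>1 \<le> P1 powr \<alpha>1 * P2 powr \<beta>1" by (simp add: mult.commute)
      then have "R1 t > 0" using k1c h s1lt[OF t(1)] by auto
      moreover have "b2 * \<alpha>1 + a2 * \<beta>1 > 0" using h g' by (simp add: algebra_simps)
      ultimately show ?thesis using z2 by simp
    next
      assume h: "\<beta>1 < 0 \<and> \<alpha>1 = a1 \<and> \<beta>1 = - b1"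
      have "P1 powr \<alpha>1 * P2 powr \<beta>1 \<le> X t powr \<alpha>1 * Y t powr \<beta>1"
        using h XP Xp Ppos pos by (intro mono_cmp) auto
      then have "R1 t < 0" using k1c h s1gt[OF t(1)] by auto
      moreover have "b2 * \<alpha>1 + a2 * \<beta>1 < 0" using h g' by (simp add: algebra_simps)
      ultimately show ?thesis using z2 by (simp add: mult_neg_neg)
    qed
  qed
  show ?thesis
    using inv C1pos unfolding a1_def b1_def by (intro exI[of _ C1]) auto
qed


lemma def_or_mixed:
  fixes a b :: real
  assumes "a \<noteq> 0 \<or> b \<noteq> 0"
  shows "definite a b \<or> a * b < 0"
  using assms unfolding definite_def
  by (cases "a > 0"; cases "b > 0"; cases "a < 0"; cases "b < 0") (auto simp: mult_pos_neg mult_neg_pos)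

lemma abs_mixed_zero:
  fixes a b :: real
  assumes "a * b < 0"
  shows "\<bar>b\<bar> * a + \<bar>a\<bar> * b = 0" "\<bar>b\<bar> > 0" "\<bar>a\<bar> > 0"
  using assms by (auto simp: mult_less_0_iff)

lemma (in traj) corner_any:
  assumes indep: "\<alpha>1 * \<beta>2 - \<beta>1 * \<alpha>2 \<noteq> 0"
  shows "\<exists>n1 n2 c. n1 > 0 \<and> n2 > 0 \<and> c > 0 \<and> (\<forall>t\<ge>0. n1 * X t + n2 * Y t \<ge> c)"
proof -
  have nz1: "\<alpha>1 \<noteq> 0 \<or> \<beta>1 \<noteq> 0" using indep by auto
  have nz2: "\<alpha>2 \<noteq> 0 \<or> \<beta>2 \<noteq> 0" using indep by auto
  consider "definite \<alpha>1 \<beta>1" "definite \<alpha>2 \<beta>2" | "\<alpha>1 * \<beta>1 < 0" "definite \<alpha>2 \<beta>2"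
    | "definite \<alpha>1 \<beta>1" "\<alpha>2 * \<beta>2 < 0" | "\<alpha>1 * \<beta>1 < 0" "\<alpha>2 * \<beta>2 < 0"
    using def_or_mixed[OF nz1] def_or_mixed[OF nz2] by blast
  then show ?thesis
  proof cases
    case 1
    then obtain c where "c>0" "\<forall>t\<ge>0. 1 * X t + 1 * Y t \<ge> c"
      using corner1[of 1 1] by auto
    then show ?thesis by (intro exI[of _ 1] exI[of _ 1] exI[of _ c]) auto
  next
    case 2
    note z = abs_mixed_zero[OF 2(1)]
    obtain c where "c>0" "\<forall>t\<ge>0. \<bar>\<beta>1\<bar> * X t + \<bar>\<alpha>1\<bar> * Y t \<ge> c"
      using corner1[of "\<bar>\<beta>1\<bar>" "\<bar>\<alpha>1\<bar>"] z 2 by auto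
    then show ?thesis using z by (intro exI[of _ "\<bar>\<beta>1\<bar>"] exI[of _ "\<bar>\<alpha>1\<bar>"] exI[of _ c]) auto
  next
    case 3
    note z = abs_mixed_zero[OF 3(2)]
    obtain c where "c>0" "\<forall>t\<ge>0. \<bar>\<beta>2\<bar> * X t + \<bar>\<alpha>2\<bar> * Y t \<ge> c"
      using corner1[of "\<bar>\<beta>2\<bar>" "\<bar>\<alpha>2\<bar>"] z 3 by auto
    then show ?thesis using z by (intro exI[of _ "\<bar>\<beta>2\<bar>"] exI[of _ "\<bar>\<alpha>2\<bar>"] exI[of _ c]) auto
  next
    case 4
    note z1 = abs_mixed_zero[OF 4(1)]
    note z2 = abs_mixed_zero[OF 4(2)]
    consider "\<bar>\<alpha>1\<bar> * \<bar>\<beta>2\<bar> < \<bar>\<alpha>2\<bar> * \<bar>\<beta>1\<bar>" | "\<bar>\<alpha>2\<bar> * \<bar>\<beta>1\<bar> < \<bar>\<alpha>1\<bar> * \<bar>\<beta>2\<bar>"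
    proof (cases "\<bar>\<alpha>1\<bar> * \<bar>\<beta>2\<bar> = \<bar>\<alpha>2\<bar> * \<bar>\<beta>1\<bar>")
      case True
      have "\<alpha>1 * \<beta>2 = \<beta>1 * \<alpha>2"
        using True 4 by (auto simp: mult_less_0_iff abs_if algebra_simps split: if_splits)
      then show ?thesis using indep by simp
    next
      case False
      then show ?thesis using that by linarith
    qed
    then show ?thesis
    proof cases
      case 1
      obtain c where "c>0" "\<forall>t\<ge>0. \<bar>\<beta>1\<bar> * X t + \<bar>\<alpha>1\<bar> * Y t \<ge> c"
        using corner3[OF 4 1] by auto
      then show ?thesis using z1 by (intro exI[of _ "\<bar>\<beta>1\<bar>"] exI[of _ "\<bar>\<alpha>1\<bar>"] exI[of _ c]) auto
    next
      case 2
      obtain c where "c>0" "\<forall>t\<ge>0. \<bar>\<beta>2\<bar> * X t + \<bar>\<alpha>2\<bar> * Y t \<ge> c"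
        using traj.corner3[OF swap_reac 4(2) 4(1) 2] by auto
      then show ?thesis using z2 by (intro exI[of _ "\<bar>\<beta>2\<bar>"] exI[of _ "\<bar>\<alpha>2\<bar>"] exI[of _ c]) auto
    qed
  qed
qed

lemma (in traj) persist:
  assumes indep: "\<alpha>1 * \<beta>2 - \<beta>1 * \<alpha>2 \<noteq> 0"
    and K: "K > 0" "\<And>t. t \<ge> 0 \<Longrightarrow> X t \<le> K" "\<And>t. t \<ge> 0 \<Longrightarrow> Y t \<le> K"
  shows "\<exists>\<delta>>0. \<forall>t\<ge>0. X t \<ge> \<delta> \<and> Y t \<ge> \<delta>"
proof -
  obtain n1 n2 c where n: "n1 > 0" "n2 > 0" "c > 0" "\<And>t. t \<ge> 0 \<Longrightarrow> n1 * X t + n2 * Y t \<ge> c"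
    using corner_any[OF indep] by blast
  have a: "\<alpha>1 \<noteq> 0 \<or> \<alpha>2 \<noteq> 0" using indep by auto
  have b: "\<beta>1 \<noteq> 0 \<or> \<beta>2 \<noteq> 0" using indep by auto
  obtain d1 where d1: "d1 > 0" "\<forall>t\<ge>0. X t \<ge> d1" using edge[OF a K(1) K(3) n] by blast
  have n': "\<And>t. t \<ge> 0 \<Longrightarrow> n2 * Y t + n1 * X t \<ge> c" using n(4) by (simp add: add.commute)
  obtain d2 where d2: "d2 > 0" "\<forall>t\<ge>0. Y t \<ge> d2" using traj.edge[OF swap_coord b K(1) K(2) n(2) n(1) n(3) n'] by blast
  show ?thesis using d1 d2 by (intro exI[of _ "min d1 d2"]) auto
qed


lemma gderiv:
  fixes X :: "real \<Rightarrow> real"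
  assumes dX: "(X has_real_derivative D) (at t within S)" and p: "X t > 0"
  shows "((\<lambda>t. X t * ln (X t) - X t * ln c - X t + c) has_real_derivative (ln (X t) - ln c) * D) (at t within S)"
proof -
  have l: "((\<lambda>t. ln (X t)) has_real_derivative (1 / X t) * D) (at t within S)"
    by (rule DERIV_chain2[OF DERIV_ln_divide[OF p] dX])
  have "((\<lambda>t. X t * ln (X t) - X t * ln c - X t + c) has_real_derivative
     (D * ln (X t) + (1 / X t) * D * X t - D * ln c - D + 0)) (at t within S)"
    by (rule DERIV_add[OF DERIV_diff[OF DERIV_diff[OF DERIV_mult[OF dX l] DERIV_cmult_right[OF dX]] dX] DERIV_const])
  moreover have "D * ln (X t) + (1 / X t) * D * X t - D * ln c - D + 0 = (ln (X t) - ln c) * D"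
  proof -
    have "(1 / X t) * D * X t = D" using p by simp
    then show ?thesis by (simp add: algebra_simps)
  qed
  ultimately show ?thesis by (rule DERIV_cong)
qed

lemma mvt_upper:
  fixes f f' :: "real \<Rightarrow> real"
  assumes df: "\<And>t. t \<ge> 0 \<Longrightarrow> (f has_real_derivative f' t) (at t within {0..})"
    and ab: "0 \<le> a" "a \<le> b" and bd: "\<And>t. a \<le> t \<Longrightarrow> t \<le> b \<Longrightarrow> f' t \<le> c"
  shows "f b - f a \<le> c * (b - a)"
proof -
  have "\<exists>x\<in>{a..b}. f b - f a = (*) (f' x) (b - a)"
  proof (rule mvt_very_simple[OF ab(2)])
    fix x assume x: "a \<le> x" "x \<le> b"
    have "(f has_real_derivative f' x) (at x within {a..b})"
    proof -
      have x0: "0 \<le> x" using x ab by simp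
      show ?thesis by (rule has_field_derivative_subset[OF df[OF x0]]) (use ab in auto)
    qed
    then show "(f has_derivative (*) (f' x)) (at x within {a..b})"
      by (simp add: has_field_derivative_def)
  qed
  then obtain x where x: "x \<in> {a..b}" "f b - f a = f' x * (b - a)" by auto
  have "f' x * (b - a) \<le> c * (b - a)" using bd[of x] x ab by (intro mult_right_mono) auto
  then show ?thesis using x by simp
qed

lemma mvt_abs:
  fixes f f' :: "real \<Rightarrow> real"
  assumes df: "\<And>t. t \<ge> 0 \<Longrightarrow> (f has_real_derivative f' t) (at t within {0..})"
    and ab: "0 \<le> a" "a \<le> b" and bd: "\<And>t. a \<le> t \<Longrightarrow> t \<le> b \<Longrightarrow> \<bar>f' t\<bar> \<le> c"
  shows "\<bar>f b - f a\<bar> \<le> c * (b - a)"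
proof -
  have "f b - f a \<le> c * (b - a)" using mvt_upper[OF df ab] bd by (meson abs_le_D1)
  moreover have "(\<lambda>t. - f t) b - (\<lambda>t. - f t) a \<le> c * (b - a)"
  proof (rule mvt_upper[OF _ ab])
    show "\<And>t. t \<ge> 0 \<Longrightarrow> ((\<lambda>t. - f t) has_real_derivative - f' t) (at t within {0..})"
      using df by (rule DERIV_minus)
    show "\<And>t. a \<le> t \<Longrightarrow> t \<le> b \<Longrightarrow> - f' t \<le> c" using bd by (meson abs_le_D2)
  qed
  ultimately show ?thesis by simp
qed

definition rate :: "real \<Rightarrow> real \<Rightarrow> real \<Rightarrow> real \<Rightarrow> real \<Rightarrow> real \<Rightarrow> real \<times> real \<Rightarrow> real" where
  "rate a b a' b' k k' p = k * mono2 a b p - k' * mono2 a' b' p"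

lemma field_eq: "ma_field a1 b1 a1' b1' a2 b2 a2' b2' k1 k2 k3 k4 p =
  (rate a1 b1 a1' b1' k1 k2 p * (a1'-a1) + rate a2 b2 a2' b2' k3 k4 p * (a2'-a2),
   rate a1 b1 a1' b1' k1 k2 p * (b1'-b1) + rate a2 b2 a2' b2' k3 k4 p * (b2'-b2))"
  unfolding ma_field_def rate_def by (simp add: algebra_simps)

lemma mono2_pos: "p \<in> pos_quad \<Longrightarrow> mono2 a b p > 0"
  unfolding mono2_def pos_quad_def by auto

lemma rate_factor:
  assumes "p \<in> pos_quad"
  shows "rate a b a' b' k k' p = k' * mono2 a b p * (k/k' - mono2 (a'-a) (b'-b) p) + (k - k' * (k/k')) * mono2 a b p"
proof -
  have "fst p powr a' = fst p powr a * fst p powr (a' - a)" by (simp add: powr_add[symmetric])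
  moreover have "snd p powr b' = snd p powr b * snd p powr (b' - b)" by (simp add: powr_add[symmetric])
  ultimately show ?thesis unfolding rate_def mono2_def by (simp add: algebra_simps)
qed

lemma rate_factor':
  assumes "p \<in> pos_quad" "k' > 0"
  shows "rate a b a' b' k k' p = k' * mono2 a b p * (k/k' - mono2 (a'-a) (b'-b) p)"
  using rate_factor[OF assms(1), of a b a' b' k k'] assms(2) by simp

lemma rate_sign:
  assumes "p \<in> pos_quad" "k' > 0"
  shows "mono2 (a'-a) (b'-b) p < k/k' \<Longrightarrow> rate a b a' b' k k' p > 0"
    and "mono2 (a'-a) (b'-b) p > k/k' \<Longrightarrow> rate a b a' b' k k' p < 0"
  using rate_factor'[OF assms, of a b a' b' k] mono2_pos[OF assms(1), of a b] assms(2)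
  by (auto simp: mult_pos_neg)

lemma g_nonneg:
  fixes c s :: real
  assumes "c > 0" "s > 0"
  shows "s * ln s - s * ln c - s + c \<ge> 0"
proof -
  have "ln (c/s) \<le> c/s - 1" using assms by (intro ln_le_minus_one) auto
  then have "ln c - ln s \<le> c/s - 1" using assms by (simp add: ln_div)
  then have "s * (ln c - ln s) \<le> s * (c/s - 1)" using assms by (intro mult_left_mono) auto
  then show ?thesis using assms by (simp add: algebra_simps)
qed

lemma g_big:
  fixes c s :: real
  assumes "c > 0" "s \<ge> c * exp 2"
  shows "s * ln s - s * ln c - s + c \<ge> s"
proof -
  have "s > 0" using assms by (smt (verit) exp_gt_zero mult_pos_pos)
  have "ln s \<ge> ln (c * exp 2)" using assms \<open>s>0\<close> by simp
  then have "ln s - ln c \<ge> 2" using assms by (simp add: ln_mult)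
  then have "s * (ln s - ln c) \<ge> s * 2" using \<open>s>0\<close> by (intro mult_left_mono) auto
  then show ?thesis using assms by (simp add: algebra_simps)
qed

lemma mk_nonneg:
  fixes m \<kappa> :: real
  assumes "m > 0" "\<kappa> > 0"
  shows "(m - \<kappa>) * (ln m - ln \<kappa>) \<ge> 0" and "m \<noteq> \<kappa> \<Longrightarrow> (m - \<kappa>) * (ln m - ln \<kappa>) > 0"
proof -
  show "(m - \<kappa>) * (ln m - ln \<kappa>) \<ge> 0"
  proof (cases "m \<ge> \<kappa>")
    case True
    then have "ln m \<ge> ln \<kappa>" using assms by simp
    then show ?thesis using True by simp
  next
    case False
    then have "ln m \<le> ln \<kappa>" using assms by simp
    then show ?thesis using False by (simp add: mult_nonpos_nonpos)
  qed
  assume "m \<noteq> \<kappa>"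
  show "(m - \<kappa>) * (ln m - ln \<kappa>) > 0"
  proof (cases "m > \<kappa>")
    case True
    then have "ln m > ln \<kappa>" using assms by simp
    then show ?thesis using True by simp
  next
    case False
    then have "m < \<kappa>" using \<open>m \<noteq> \<kappa>\<close> by simp
    then have "ln m < ln \<kappa>" using assms by simp
    then show ?thesis using \<open>m < \<kappa>\<close> by (simp add: mult_neg_neg)
  qed
qed

lemma continuous_on_mono2:
  assumes "\<forall>p\<in>S. fst p > 0 \<and> snd p > 0"
  shows "continuous_on S (mono2 a b)"
proof -
  have c1: "continuous_on S (\<lambda>p. fst p powr a)"
    by (rule continuous_on_powr[OF continuous_on_fst[OF continuous_on_id] continuous_on_const]) (use assms in force)
  have c2: "continuous_on S (\<lambda>p. snd p powr b)"
    by (rule continuous_on_powr[OF continuous_on_snd[OF continuous_on_id] continuous_on_const]) (use assms in force)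
  have "continuous_on S (\<lambda>p. fst p powr a * snd p powr b)"
    by (rule continuous_on_mult[OF c1 c2])
  then show ?thesis unfolding mono2_def[abs_def] .
qed


locale sys =
  fixes a1 b1 a1' b1' a2 b2 a2' b2' k1 k2 k3 k4 :: real and x :: "real \<Rightarrow> real \<times> real"
  assumes indep: "(a1' - a1) * (b2' - b2) - (b1' - b1) * (a2' - a2) \<noteq> 0"
    and kp: "k1 > 0" "k2 > 0" "k3 > 0" "k4 > 0"
    and sol: "is_solution a1 b1 a1' b1' a2 b2 a2' b2' k1 k2 k3 k4 x"
begin

definition "X t = fst (x t)"
definition "Y t = snd (x t)"
definition "R1 t = rate a1 b1 a1' b1' k1 k2 (x t)"
definition "R2 t = rate a2 b2 a2' b2' k3 k4 (x t)"

lemma inpos: "t \<ge> 0 \<Longrightarrow> x t \<in> pos_quad"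
  using sol unfolding is_solution_def by blast

lemma XYpos: "t \<ge> 0 \<Longrightarrow> X t > 0" "t \<ge> 0 \<Longrightarrow> Y t > 0"
  using inpos unfolding pos_quad_def X_def Y_def by auto

lemma xeq: "x t = (X t, Y t)"
  unfolding X_def Y_def by simp

lemma dx: "t \<ge> 0 \<Longrightarrow> (x has_vector_derivative ma_field a1 b1 a1' b1' a2 b2 a2' b2' k1 k2 k3 k4 (x t)) (at t within {0..})"
  using sol unfolding is_solution_def by blast

lemma dXc: "t \<ge> 0 \<Longrightarrow> (X has_real_derivative (R1 t * (a1'-a1) + R2 t * (a2'-a2))) (at t within {0..})"
proof -
  assume t: "t \<ge> 0"
  have "((\<lambda>t. fst (x t)) has_vector_derivative fst (ma_field a1 b1 a1' b1' a2 b2 a2' b2' k1 k2 k3 k4 (x t))) (at t within {0..})"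
    by (rule bounded_linear.has_vector_derivative[OF bounded_linear_fst dx[OF t]])
  then show ?thesis unfolding has_real_derivative_iff_has_vector_derivative X_def[abs_def] R1_def R2_def field_eq
    by simp
qed

lemma dYc: "t \<ge> 0 \<Longrightarrow> (Y has_real_derivative (R1 t * (b1'-b1) + R2 t * (b2'-b2))) (at t within {0..})"
proof -
  assume t: "t \<ge> 0"
  have "((\<lambda>t. snd (x t)) has_vector_derivative snd (ma_field a1 b1 a1' b1' a2 b2 a2' b2' k1 k2 k3 k4 (x t))) (at t within {0..})"
    by (rule bounded_linear.has_vector_derivative[OF bounded_linear_snd dx[OF t]])
  then show ?thesis unfolding has_real_derivative_iff_has_vector_derivative Y_def[abs_def] R1_def R2_def field_eq
    by simp
qed

lemma mono_xt: "mono2 a b (x t) = X t powr a * Y t powr b"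
  unfolding mono2_def X_def Y_def ..

lemma is_traj: "traj X Y R1 R2 (a1'-a1) (b1'-b1) (a2'-a2) (b2'-b2) (k1/k2) (k3/k4)"
proof (unfold_locales)
  fix t :: real assume t: "t \<ge> 0"
  show "X t > 0" "Y t > 0" using XYpos[OF t] by auto
  show "(X has_real_derivative R1 t * (a1'-a1) + R2 t * (a2'-a2)) (at t within {0..})" by (rule dXc[OF t])
  show "(Y has_real_derivative R1 t * (b1'-b1) + R2 t * (b2'-b2)) (at t within {0..})" by (rule dYc[OF t])
  show "X t powr (a1'-a1) * Y t powr (b1'-b1) < k1/k2 \<Longrightarrow> R1 t > 0"
    unfolding R1_def mono_xt[symmetric] by (rule rate_sign(1)[OF inpos[OF t] kp(2)])
  show "X t powr (a1'-a1) * Y t powr (b1'-b1) > k1/k2 \<Longrightarrow> R1 t < 0"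
    unfolding R1_def mono_xt[symmetric] by (rule rate_sign(2)[OF inpos[OF t] kp(2)])
  show "X t powr (a2'-a2) * Y t powr (b2'-b2) < k3/k4 \<Longrightarrow> R2 t > 0"
    unfolding R2_def mono_xt[symmetric] by (rule rate_sign(1)[OF inpos[OF t] kp(4)])
  show "X t powr (a2'-a2) * Y t powr (b2'-b2) > k3/k4 \<Longrightarrow> R2 t < 0"
    unfolding R2_def mono_xt[symmetric] by (rule rate_sign(2)[OF inpos[OF t] kp(4)])
next
  show "k1/k2 > 0" "k3/k4 > 0" using kp by auto
qed

end

definition gg :: "real \<Rightarrow> real \<Rightarrow> real" where "gg c s = s * ln s - s * ln c - s + c"

lemma alg_G:
  fixes u w L1 L2 lm1 lk1 lm2 lk2 a b c d R1 R2 P1 P2 k1 k2 m1 m2 :: real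
  assumes "lm1 = a*u + b*w" "lk1 = a*L1 + b*L2" "lm2 = c*u + d*w" "lk2 = c*L1 + d*L2"
    "R1 = P1 * (k1 - m1)" "R2 = P2 * (k2 - m2)"
  shows "(u - L1) * (R1 * a + R2 * c) + (w - L2) * (R1 * b + R2 * d) =
     - (P1 * (m1 - k1) * (lm1 - lk1) + P2 * (m2 - k2) * (lm2 - lk2))"
  unfolding assms by (simp add: algebra_simps)

context sys begin

abbreviation "al1 \<equiv> a1' - a1"
abbreviation "be1 \<equiv> b1' - b1"
abbreviation "al2 \<equiv> a2' - a2"
abbreviation "be2 \<equiv> b2' - b2"
abbreviation "kap1 \<equiv> k1 / k2"
abbreviation "kap2 \<equiv> k3 / k4"
abbreviation "Dt \<equiv> (a1' - a1) * (b2' - b2) - (b1' - b1) * (a2' - a2)"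

definition "L1 = (ln kap1 * be2 - be1 * ln kap2) / Dt"
definition "L2 = (al1 * ln kap2 - al2 * ln kap1) / Dt"
definition "A = (exp L1, exp L2)"

lemma L_eq: "al1 * L1 + be1 * L2 = ln kap1" "al2 * L1 + be2 * L2 = ln kap2"
proof -
  have "al1 * L1 + be1 * L2 = (al1 * (ln kap1 * be2 - be1 * ln kap2) + be1 * (al1 * ln kap2 - al2 * ln kap1)) / Dt"
    unfolding L1_def L2_def by (simp add: add_divide_distrib)
  also have "\<dots> = Dt * ln kap1 / Dt" by (simp add: algebra_simps)
  also have "\<dots> = ln kap1" using indep by simp
  finally show "al1 * L1 + be1 * L2 = ln kap1" .
  have "al2 * L1 + be2 * L2 = (al2 * (ln kap1 * be2 - be1 * ln kap2) + be2 * (al1 * ln kap2 - al2 * ln kap1)) / Dt"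
    unfolding L1_def L2_def by (simp add: add_divide_distrib)
  also have "\<dots> = Dt * ln kap2 / Dt" by (simp add: algebra_simps)
  also have "\<dots> = ln kap2" using indep by simp
  finally show "al2 * L1 + be2 * L2 = ln kap2" .
qed

lemma A_pos: "A \<in> pos_quad" unfolding A_def pos_quad_def by simp

lemma mono2_exp: "mono2 a b (exp u, exp w) = exp (a * u + b * w)"
  unfolding mono2_def by (simp add: exp_powr_real exp_add algebra_simps)

lemma A_mono: "mono2 al1 be1 A = kap1" "mono2 al2 be2 A = kap2"
  unfolding A_def mono2_exp L_eq using kp by auto

lemma ln_mono2: "p \<in> pos_quad \<Longrightarrow> ln (mono2 a b p) = a * ln (fst p) + b * ln (snd p)"
  unfolding mono2_def pos_quad_def by (simp add: ln_mult)

lemma A_unique: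
  assumes p: "p \<in> pos_quad" and m: "mono2 al1 be1 p = kap1" "mono2 al2 be2 p = kap2"
  shows "p = A"
proof -
  define u where "u = ln (fst p)"
  define w where "w = ln (snd p)"
  have e1: "al1 * u + be1 * w = ln kap1" using ln_mono2[OF p, of al1 be1] m unfolding u_def w_def by simp
  have e2: "al2 * u + be2 * w = ln kap2" using ln_mono2[OF p, of al2 be2] m unfolding u_def w_def by simp
  have "Dt * u = be2 * (al1 * u + be1 * w) - be1 * (al2 * u + be2 * w)" by (simp add: algebra_simps)
  also have "\<dots> = Dt * L1"
  proof -
    have DL1: "Dt * L1 = ln kap1 * be2 - be1 * ln kap2" unfolding L1_def using indep by simp
    show ?thesis unfolding e1 e2 DL1 by (simp add: algebra_simps)
  qed
  finally have "u = L1" using indep by simp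
  have "Dt * w = al1 * (al2 * u + be2 * w) - al2 * (al1 * u + be1 * w)" by (simp add: algebra_simps)
  also have "\<dots> = Dt * L2"
  proof -
    have DL2: "Dt * L2 = al1 * ln kap2 - al2 * ln kap1" unfolding L2_def using indep by simp
    show ?thesis unfolding e1 e2 DL2 by (simp add: algebra_simps)
  qed
  finally have "w = L2" using indep by simp
  have "fst p = exp L1" using p \<open>u = L1\<close> unfolding u_def pos_quad_def by (metis exp_ln mem_Collect_eq)
  moreover have "snd p = exp L2" using p \<open>w = L2\<close> unfolding w_def pos_quad_def by (metis exp_ln mem_Collect_eq)
  ultimately show ?thesis unfolding A_def by (simp add: prod_eq_iff)
qed

lemma A_set: "{p \<in> pos_quad. mono2 al1 be1 p = kap1 \<and> mono2 al2 be2 p = kap2} = {A}"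
  using A_unique A_pos A_mono by blast

definition "Gf t = gg (fst A) (X t) + gg (snd A) (Y t)"

definition "Phi p = k2 * mono2 a1 b1 p * (mono2 al1 be1 p - kap1) * (ln (mono2 al1 be1 p) - ln kap1)
   + k4 * mono2 a2 b2 p * (mono2 al2 be2 p - kap2) * (ln (mono2 al2 be2 p) - ln kap2)"

lemma Phi_nonneg: assumes p: "p \<in> pos_quad" shows "Phi p \<ge> 0"
proof -
  have t1: "(mono2 al1 be1 p - kap1) * (ln (mono2 al1 be1 p) - ln kap1) \<ge> 0"
    using mk_nonneg(1)[OF mono2_pos[OF p]] kp by simp
  have t2: "(mono2 al2 be2 p - kap2) * (ln (mono2 al2 be2 p) - ln kap2) \<ge> 0"
    using mk_nonneg(1)[OF mono2_pos[OF p]] kp by simp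
  have c1: "k2 * mono2 a1 b1 p \<ge> 0" using kp mono2_pos[OF p, of a1 b1] by simp
  have c2: "k4 * mono2 a2 b2 p \<ge> 0" using kp mono2_pos[OF p, of a2 b2] by simp
  have "Phi p = (k2 * mono2 a1 b1 p) * ((mono2 al1 be1 p - kap1) * (ln (mono2 al1 be1 p) - ln kap1))
     + (k4 * mono2 a2 b2 p) * ((mono2 al2 be2 p - kap2) * (ln (mono2 al2 be2 p) - ln kap2))"
    unfolding Phi_def by (simp add: mult.assoc)
  also have "\<dots> \<ge> 0" by (rule add_nonneg_nonneg[OF mult_nonneg_nonneg[OF c1 t1] mult_nonneg_nonneg[OF c2 t2]])
  finally show ?thesis .
qed

lemma Phi_pos: assumes "p \<in> pos_quad" "p \<noteq> A" shows "Phi p > 0"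
proof -
  have p: "p \<in> pos_quad" by (rule assms(1))
  have "mono2 al1 be1 p \<noteq> kap1 \<or> mono2 al2 be2 p \<noteq> kap2" using A_unique assms by blast
  have t1: "(mono2 al1 be1 p - kap1) * (ln (mono2 al1 be1 p) - ln kap1) \<ge> 0"
    using mk_nonneg(1)[OF mono2_pos[OF p]] kp by simp
  have t2: "(mono2 al2 be2 p - kap2) * (ln (mono2 al2 be2 p) - ln kap2) \<ge> 0"
    using mk_nonneg(1)[OF mono2_pos[OF p]] kp by simp
  have c1: "k2 * mono2 a1 b1 p > 0" using kp mono2_pos[OF p, of a1 b1] by simp
  have c2: "k4 * mono2 a2 b2 p > 0" using kp mono2_pos[OF p, of a2 b2] by simp
  have eq: "Phi p = (k2 * mono2 a1 b1 p) * ((mono2 al1 be1 p - kap1) * (ln (mono2 al1 be1 p) - ln kap1))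
     + (k4 * mono2 a2 b2 p) * ((mono2 al2 be2 p - kap2) * (ln (mono2 al2 be2 p) - ln kap2))"
    unfolding Phi_def by (simp add: mult.assoc)
  from \<open>mono2 al1 be1 p \<noteq> kap1 \<or> mono2 al2 be2 p \<noteq> kap2\<close> show ?thesis
  proof
    assume h: "mono2 al1 be1 p \<noteq> kap1"
    have "(mono2 al1 be1 p - kap1) * (ln (mono2 al1 be1 p) - ln kap1) > 0"
      using mk_nonneg(2)[OF mono2_pos[OF p] _ h] kp by simp
    then have "(k2 * mono2 a1 b1 p) * ((mono2 al1 be1 p - kap1) * (ln (mono2 al1 be1 p) - ln kap1)) > 0"
      using c1 by simp
    moreover have "(k4 * mono2 a2 b2 p) * ((mono2 al2 be2 p - kap2) * (ln (mono2 al2 be2 p) - ln kap2)) \<ge> 0"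
      using c2 t2 by simp
    ultimately show ?thesis unfolding eq by simp
  next
    assume h: "mono2 al2 be2 p \<noteq> kap2"
    have "(mono2 al2 be2 p - kap2) * (ln (mono2 al2 be2 p) - ln kap2) > 0"
      using mk_nonneg(2)[OF mono2_pos[OF p] _ h] kp by simp
    then have "(k4 * mono2 a2 b2 p) * ((mono2 al2 be2 p - kap2) * (ln (mono2 al2 be2 p) - ln kap2)) > 0"
      using c2 by simp
    moreover have "(k2 * mono2 a1 b1 p) * ((mono2 al1 be1 p - kap1) * (ln (mono2 al1 be1 p) - ln kap1)) \<ge> 0"
      using c1 t1 by simp
    ultimately show ?thesis unfolding eq by simp
  qed
qed

lemma dG: "t \<ge> 0 \<Longrightarrow> (Gf has_real_derivative - Phi (x t)) (at t within {0..})"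
proof -
  assume t: "t \<ge> 0"
  have gX: "((\<lambda>t. X t * ln (X t) - X t * ln (fst A) - X t + fst A) has_real_derivative
      (ln (X t) - ln (fst A)) * (R1 t * al1 + R2 t * al2)) (at t within {0..})"
    by (rule gderiv[OF dXc[OF t] XYpos(1)[OF t]])
  have gY: "((\<lambda>t. Y t * ln (Y t) - Y t * ln (snd A) - Y t + snd A) has_real_derivative
      (ln (Y t) - ln (snd A)) * (R1 t * be1 + R2 t * be2)) (at t within {0..})"
    by (rule gderiv[OF dYc[OF t] XYpos(2)[OF t]])
  have s: "((\<lambda>t. (X t * ln (X t) - X t * ln (fst A) - X t + fst A) + (Y t * ln (Y t) - Y t * ln (snd A) - Y t + snd A))
     has_real_derivative (ln (X t) - ln (fst A)) * (R1 t * al1 + R2 t * al2) + (ln (Y t) - ln (snd A)) * (R1 t * be1 + R2 t * be2))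
     (at t within {0..})"
    by (rule DERIV_add[OF gX gY])
  have Geq: "Gf = (\<lambda>t. (X t * ln (X t) - X t * ln (fst A) - X t + fst A) + (Y t * ln (Y t) - Y t * ln (snd A) - Y t + snd A))"
    unfolding Gf_def[abs_def] gg_def ..
  have lA: "ln (fst A) = L1" "ln (snd A) = L2" unfolding A_def by auto
  have xp: "x t \<in> pos_quad" by (rule inpos[OF t])
  have r1: "R1 t = (k2 * mono2 a1 b1 (x t)) * (kap1 - mono2 al1 be1 (x t))"
    unfolding R1_def using rate_factor'[OF xp kp(2)] by simp
  have r2: "R2 t = (k4 * mono2 a2 b2 (x t)) * (kap2 - mono2 al2 be2 (x t))"
    unfolding R2_def using rate_factor'[OF xp kp(4)] by simp
  have lm1: "ln (mono2 al1 be1 (x t)) = al1 * ln (X t) + be1 * ln (Y t)"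
    using ln_mono2[OF xp] unfolding X_def Y_def by simp
  have lm2: "ln (mono2 al2 be2 (x t)) = al2 * ln (X t) + be2 * ln (Y t)"
    using ln_mono2[OF xp] unfolding X_def Y_def by simp
  have eq: "(ln (X t) - ln (fst A)) * (R1 t * al1 + R2 t * al2) + (ln (Y t) - ln (snd A)) * (R1 t * be1 + R2 t * be2)
      = - Phi (x t)"
    unfolding lA Phi_def
    by (rule alg_G[OF lm1 L_eq(1)[symmetric] lm2 L_eq(2)[symmetric] r1 r2])
  show ?thesis unfolding Geq using s eq by (rule DERIV_cong)
qed

end

lemma cont_term:
  fixes f g :: "real \<times> real \<Rightarrow> real"
  assumes hf: "continuous_on S f" and hg: "continuous_on S g" and gp: "\<forall>p\<in>S. g p > 0"
  shows "continuous_on S (\<lambda>p. k * f p * (g p - c) * (ln (g p) - d))"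
proof -
  have gn: "\<forall>p\<in>S. g p \<noteq> 0" using gp by auto
  show ?thesis
    by (rule continuous_on_mult[OF continuous_on_mult[OF continuous_on_mult[OF continuous_on_const hf]
        continuous_on_diff[OF hg continuous_on_const]] continuous_on_diff[OF continuous_on_ln[OF hg gn] continuous_on_const]])
qed

lemma cont_rate:
  assumes "\<forall>p\<in>S. fst p > 0 \<and> snd p > 0"
  shows "continuous_on S (rate a b a' b' k k')"
proof -
  have "continuous_on S (\<lambda>p. k * mono2 a b p - k' * mono2 a' b' p)"
    by (rule continuous_on_diff[OF continuous_on_mult[OF continuous_on_const continuous_on_mono2[OF assms]]
          continuous_on_mult[OF continuous_on_const continuous_on_mono2[OF assms]]])
  then show ?thesis unfolding rate_def[abs_def] .
qed

lemma bounded_cont: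
  fixes f :: "real \<times> real \<Rightarrow> real"
  assumes "continuous_on S f" "compact S"
  shows "\<exists>B. \<forall>p\<in>S. \<bar>f p\<bar> \<le> B"
proof -
  have "bounded (f ` S)" by (rule compact_imp_bounded[OF compact_continuous_image[OF assms]])
  then obtain B where "\<forall>y\<in>f ` S. norm y \<le> B" unfolding bounded_iff by blast
  then show ?thesis by auto
qed

context sys begin

lemma G_anti: assumes "0 \<le> s" "s \<le> t" shows "Gf t \<le> Gf s"
proof -
  have "Gf t - Gf s \<le> 0 * (t - s)"
  proof (rule mvt_upper[OF dG assms])
    fix u assume "s \<le> u" "u \<le> t"
    then have "u \<ge> 0" using assms by simp
    show "- Phi (x u) \<le> 0" using Phi_nonneg[OF inpos[OF \<open>u \<ge> 0\<close>]] by simp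
  qed
  then show ?thesis by simp
qed

lemma G_nonneg: "t \<ge> 0 \<Longrightarrow> Gf t \<ge> 0"
proof -
  assume t: "t \<ge> 0"
  have "fst A > 0" "snd A > 0" using A_pos unfolding pos_quad_def by auto
  then have "gg (fst A) (X t) \<ge> 0" "gg (snd A) (Y t) \<ge> 0"
    unfolding gg_def using g_nonneg XYpos[OF t] by auto
  then show ?thesis unfolding Gf_def by simp
qed

lemma upper: "\<exists>K>0. \<forall>t\<ge>0. X t \<le> K \<and> Y t \<le> K"
proof -
  have Ap: "fst A > 0" "snd A > 0" using A_pos unfolding pos_quad_def by auto
  define K where "K = max (max (fst A * exp 2) (snd A * exp 2)) (Gf 0) + 1"
  have "K > 0" unfolding K_def using Ap by (smt (verit) exp_gt_zero mult_pos_pos)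
  moreover have "X t \<le> K \<and> Y t \<le> K" if t: "t \<ge> 0" for t
  proof -
    have g1: "gg (fst A) (X t) \<ge> 0" "gg (snd A) (Y t) \<ge> 0"
      unfolding gg_def using g_nonneg XYpos[OF t] Ap by auto
    have G: "Gf t \<le> Gf 0" using G_anti[of 0 t] t by simp
    have "X t \<le> K"
    proof (cases "X t \<ge> fst A * exp 2")
      case True
      then have "X t \<le> gg (fst A) (X t)" unfolding gg_def using g_big Ap by auto
      then have "X t \<le> Gf t" using g1 unfolding Gf_def by simp
      then show ?thesis using G unfolding K_def by simp
    next
      case False then show ?thesis unfolding K_def by simp
    qed
    moreover have "Y t \<le> K"
    proof (cases "Y t \<ge> snd A * exp 2")
      case True
      then have "Y t \<le> gg (snd A) (Y t)" unfolding gg_def using g_big Ap by auto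
      then have "Y t \<le> Gf t" using g1 unfolding Gf_def by simp
      then show ?thesis using G unfolding K_def by simp
    next
      case False then show ?thesis unfolding K_def by simp
    qed
    ultimately show ?thesis by simp
  qed
  ultimately show ?thesis by blast
qed

lemma lower: "\<exists>\<delta>>0. \<forall>t\<ge>0. X t \<ge> \<delta> \<and> Y t \<ge> \<delta>"
proof -
  obtain K where K: "K > 0" "\<And>t. t \<ge> 0 \<Longrightarrow> X t \<le> K \<and> Y t \<le> K" using upper by blast
  show ?thesis using traj.persist[OF is_traj indep K(1)] K(2) by blast
qed

end

context sys begin

lemma fstx: "fst (x t) = X t" and sndx: "snd (x t) = Y t" unfolding X_def Y_def by simp_all

lemma conv: "(x \<longlongrightarrow> A) at_top"
proof -
  obtain K where K: "K > 0" "\<forall>t\<ge>0. X t \<le> K \<and> Y t \<le> K" using upper by (elim exE conjE) (rule that)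
  obtain dd where dd: "dd > 0" "\<forall>t\<ge>0. X t \<ge> dd \<and> Y t \<ge> dd" using lower by (elim exE conjE) (rule that)
  define Bx where "Bx = {dd..K} \<times> {dd..K}"
  have xin: "x t \<in> Bx" if "t \<ge> 0" for t
    using K(2)[rule_format, OF that] dd(2)[rule_format, OF that] unfolding Bx_def mem_Times_iff fstx sndx by auto
  have Bpos: "\<forall>p\<in>Bx. fst p > 0 \<and> snd p > 0" unfolding Bx_def using dd(1) by auto
  have Bsub: "Bx \<subseteq> pos_quad" using Bpos unfolding pos_quad_def by auto
  have cBx: "compact Bx" unfolding Bx_def by (intro compact_Times compact_Icc)
  define F1 where "F1 p = rate a1 b1 a1' b1' k1 k2 p * al1 + rate a2 b2 a2' b2' k3 k4 p * al2" for p
  define F2 where "F2 p = rate a1 b1 a1' b1' k1 k2 p * be1 + rate a2 b2 a2' b2' k3 k4 p * be2" for p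
  have cF1: "continuous_on Bx F1" unfolding F1_def[abs_def]
    by (rule continuous_on_add[OF continuous_on_mult[OF cont_rate[OF Bpos] continuous_on_const]
          continuous_on_mult[OF cont_rate[OF Bpos] continuous_on_const]])
  have cF2: "continuous_on Bx F2" unfolding F2_def[abs_def]
    by (rule continuous_on_add[OF continuous_on_mult[OF cont_rate[OF Bpos] continuous_on_const]
          continuous_on_mult[OF cont_rate[OF Bpos] continuous_on_const]])
  obtain B1 where B1: "\<forall>p\<in>Bx. \<bar>F1 p\<bar> \<le> B1" using bounded_cont[OF cF1 cBx] by blast
  obtain B2 where B2: "\<forall>p\<in>Bx. \<bar>F2 p\<bar> \<le> B2" using bounded_cont[OF cF2 cBx] by blast
  define B where "B = max B1 B2 + 1"
  have "B > 0" unfolding B_def using B1 xin[of 0] by (smt (verit) abs_ge_zero)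
  have bX: "\<bar>R1 u * al1 + R2 u * al2\<bar> \<le> B" if "u \<ge> 0" for u
    using B1 xin[OF that] unfolding B_def F1_def R1_def R2_def by force
  have bY: "\<bar>R1 u * be1 + R2 u * be2\<bar> \<le> B" if "u \<ge> 0" for u
    using B2 xin[OF that] unfolding B_def F2_def R1_def R2_def by force
  have lipX: "\<bar>X u - X t\<bar> \<le> B * (u - t)" if "0 \<le> t" "t \<le> u" for t u
    by (rule mvt_abs[OF dXc that]) (use bX that in auto)
  have lipY: "\<bar>Y u - Y t\<bar> \<le> B * (u - t)" if "0 \<le> t" "t \<le> u" for t u
    by (rule mvt_abs[OF dYc that]) (use bY that in auto)
  have cPhi: "continuous_on Bx Phi"
  proof -
    have m1: "\<forall>p\<in>Bx. mono2 al1 be1 p > 0" "\<forall>p\<in>Bx. mono2 al2 be2 p > 0"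
      using Bsub mono2_pos by auto
    have "continuous_on Bx (\<lambda>p. k2 * mono2 a1 b1 p * (mono2 al1 be1 p - kap1) * (ln (mono2 al1 be1 p) - ln kap1)
      + k4 * mono2 a2 b2 p * (mono2 al2 be2 p - kap2) * (ln (mono2 al2 be2 p) - ln kap2))"
      by (rule continuous_on_add[OF cont_term[OF continuous_on_mono2[OF Bpos] continuous_on_mono2[OF Bpos] m1(1)]
            cont_term[OF continuous_on_mono2[OF Bpos] continuous_on_mono2[OF Bpos] m1(2)]])
    then show ?thesis unfolding Phi_def[abs_def] .
  qed
  have main: "\<exists>T. \<forall>t\<ge>T. \<bar>X t - fst A\<bar> < \<epsilon> \<and> \<bar>Y t - snd A\<bar> < \<epsilon>" if "\<epsilon> > 0" for \<epsilon>
  proof (rule ccontr)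
    assume nb: "\<not> (\<exists>T. \<forall>t\<ge>T. \<bar>X t - fst A\<bar> < \<epsilon> \<and> \<bar>Y t - snd A\<bar> < \<epsilon>)"
    have bad: "\<exists>t\<ge>T. \<epsilon> \<le> \<bar>X t - fst A\<bar> \<or> \<epsilon> \<le> \<bar>Y t - snd A\<bar>" for T
      using nb by (meson not_le)
    define S where "S = Bx \<inter> ({p. \<epsilon>/2 \<le> \<bar>fst p - fst A\<bar>} \<union> {p. \<epsilon>/2 \<le> \<bar>snd p - snd A\<bar>})"
    have clS: "closed ({p. \<epsilon>/2 \<le> \<bar>fst p - fst A\<bar>} \<union> {p. \<epsilon>/2 \<le> \<bar>snd p - snd A\<bar>})"
      by (intro closed_Un closed_Collect_le continuous_intros)
    have cS: "compact S" unfolding S_def by (rule compact_Int_closed[OF cBx clS])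
    have SB: "S \<subseteq> Bx" unfolding S_def by auto
    obtain t0 where t0: "t0 \<ge> 0" "\<epsilon> \<le> \<bar>X t0 - fst A\<bar> \<or> \<epsilon> \<le> \<bar>Y t0 - snd A\<bar>" using bad[of 0] by blast
    have "x t0 \<in> S" unfolding S_def using xin[OF t0(1)] t0(2) \<open>\<epsilon> > 0\<close> by (auto simp: fstx sndx)
    then have Sne: "S \<noteq> {}" by auto
    obtain q where q: "q \<in> S" "\<forall>p\<in>S. Phi q \<le> Phi p"
      using continuous_attains_inf[OF cS Sne continuous_on_subset[OF cPhi SB]] by blast
    have "q \<noteq> A" using q(1) \<open>\<epsilon> > 0\<close> unfolding S_def by auto
    moreover have "q \<in> pos_quad" using q(1) SB Bsub by blast
    ultimately have \<eta>: "Phi q > 0" using Phi_pos by blast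
    define \<eta> where "\<eta> = Phi q"
    define \<tau> where "\<tau> = \<epsilon> / (2 * B)"
    have "\<tau> > 0" unfolding \<tau>_def using \<open>\<epsilon> > 0\<close> \<open>B > 0\<close> by simp
    have B\<tau>: "B * \<tau> = \<epsilon> / 2" unfolding \<tau>_def using \<open>B > 0\<close> by simp
    have drop: "Gf (t + \<tau>) \<le> Gf t - \<eta> * \<tau>"
      if t: "t \<ge> 0" "\<epsilon> \<le> \<bar>X t - fst A\<bar> \<or> \<epsilon> \<le> \<bar>Y t - snd A\<bar>" for t
    proof -
      have "Gf (t + \<tau>) - Gf t \<le> (- \<eta>) * (t + \<tau> - t)"
      proof (rule mvt_upper[OF dG])
        show "0 \<le> t" "t \<le> t + \<tau>" using t \<open>\<tau> > 0\<close> by auto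
        fix u assume u: "t \<le> u" "u \<le> t + \<tau>"
        have u0: "u \<ge> 0" using u t by simp
        have "\<bar>X u - X t\<bar> \<le> \<epsilon>/2"
          using lipX[OF t(1) u(1)] mult_left_mono[of "u - t" \<tau> B] u \<open>B > 0\<close> B\<tau> by simp
        moreover have "\<bar>Y u - Y t\<bar> \<le> \<epsilon>/2"
          using lipY[OF t(1) u(1)] mult_left_mono[of "u - t" \<tau> B] u \<open>B > 0\<close> B\<tau> by simp
        ultimately have "\<epsilon>/2 \<le> \<bar>X u - fst A\<bar> \<or> \<epsilon>/2 \<le> \<bar>Y u - snd A\<bar>" using t(2) by linarith
        then have "x u \<in> S" unfolding S_def using xin[OF u0] by (auto simp: fstx sndx)
        then have "Phi (x u) \<ge> \<eta>" using q(2) unfolding \<eta>_def by auto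
        then show "- Phi (x u) \<le> - \<eta>" by simp
      qed
      then show ?thesis by simp
    qed
    have iter: "\<exists>t\<ge>0. Gf t \<le> Gf 0 - real n * (\<eta> * \<tau>)" for n :: nat
    proof (induction n)
      case 0 then show ?case by (intro exI[of _ 0]) simp
    next
      case (Suc n)
      then obtain t where t: "t \<ge> 0" "Gf t \<le> Gf 0 - real n * (\<eta> * \<tau>)" by blast
      obtain s where s: "s \<ge> t" "\<epsilon> \<le> \<bar>X s - fst A\<bar> \<or> \<epsilon> \<le> \<bar>Y s - snd A\<bar>" using bad[of t] by blast
      have "Gf (s + \<tau>) \<le> Gf s - \<eta> * \<tau>" using drop[of s] s t by simp
      moreover have "Gf s \<le> Gf t" using G_anti[of t s] s t by simp
      ultimately have "Gf (s + \<tau>) \<le> Gf 0 - real (Suc n) * (\<eta> * \<tau>)" using t by (simp add: algebra_simps)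
      moreover have "s + \<tau> \<ge> 0" using s t \<open>\<tau> > 0\<close> by simp
      ultimately show ?case by blast
    qed
    have "\<eta> * \<tau> > 0" using \<eta> \<open>\<tau> > 0\<close> unfolding \<eta>_def by simp
    obtain n :: nat where n: "Gf 0 / (\<eta> * \<tau>) < real n" using reals_Archimedean2 by blast
    then have "Gf 0 < real n * (\<eta> * \<tau>)" using \<open>\<eta> * \<tau> > 0\<close> by (simp add: divide_less_eq)
    moreover obtain t where "t \<ge> 0" "Gf t \<le> Gf 0 - real n * (\<eta> * \<tau>)" using iter by blast
    ultimately have "Gf t < 0" by simp
    then show False using G_nonneg[OF \<open>t \<ge> 0\<close>] by simp
  qed
  have tX: "(X \<longlongrightarrow> fst A) at_top"
    unfolding tendsto_iff
  proof (intro allI impI)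
    fix \<epsilon> :: real assume "\<epsilon> > 0"
    then obtain T where "\<forall>t\<ge>T. \<bar>X t - fst A\<bar> < \<epsilon> \<and> \<bar>Y t - snd A\<bar> < \<epsilon>" using main by blast
    then show "\<forall>\<^sub>F t in at_top. dist (X t) (fst A) < \<epsilon>"
      unfolding eventually_at_top_linorder dist_real_def by blast
  qed
  have tY: "(Y \<longlongrightarrow> snd A) at_top"
    unfolding tendsto_iff
  proof (intro allI impI)
    fix \<epsilon> :: real assume "\<epsilon> > 0"
    then obtain T where "\<forall>t\<ge>T. \<bar>X t - fst A\<bar> < \<epsilon> \<and> \<bar>Y t - snd A\<bar> < \<epsilon>" using main by blast
    then show "\<forall>\<^sub>F t in at_top. dist (Y t) (snd A) < \<epsilon>"
      unfolding eventually_at_top_linorder dist_real_def by blast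
  qed
  have "((\<lambda>t. (X t, Y t)) \<longlongrightarrow> (fst A, snd A)) at_top" by (rule tendsto_Pair[OF tX tY])
  moreover have "(\<lambda>t. (X t, Y t)) = x" by (rule ext) (simp add: X_def Y_def)
  ultimately show ?thesis by simp
qed

end

lemma (in sys) final:
  "\<exists>A'. {p \<in> pos_quad. mono2 (a1' - a1) (b1' - b1) p = k1/k2} \<inter> {p \<in> pos_quad. mono2 (a2' - a2) (b2' - b2) p = k3/k4} = {A'}
     \<and> (x \<longlongrightarrow> A') at_top"
proof -
  have "{p \<in> pos_quad. mono2 (a1' - a1) (b1' - b1) p = k1/k2} \<inter> {p \<in> pos_quad. mono2 (a2' - a2) (b2' - b2) p = k3/k4}
      = {p \<in> pos_quad. mono2 al1 be1 p = kap1 \<and> mono2 al2 be2 p = kap2}" by blast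
  then show ?thesis using A_set conv by (intro exI[of _ A]) simp
qed

lemma general:
  fixes a1 b1 a1' b1' a2 b2 a2' b2' K1 K2 K3 K4 :: real and x :: "real \<Rightarrow> real \<times> real"
  assumes "(a1' - a1) * (b2' - b2) - (b1' - b1) * (a2' - a2) \<noteq> 0"
    and "K1 > 0" "K2 > 0" "K3 > 0" "K4 > 0"
    and "is_solution a1 b1 a1' b1' a2 b2 a2' b2' K1 K2 K3 K4 x"
  shows "\<exists>A'. {p \<in> pos_quad. mono2 (a1' - a1) (b1' - b1) p = K1/K2} \<inter> {p \<in> pos_quad. mono2 (a2' - a2) (b2' - b2) p = K3/K4} = {A'}
     \<and> (x \<longlongrightarrow> A') at_top"
proof -
  interpret sys a1 b1 a1' b1' a2 b2 a2' b2' K1 K2 K3 K4 x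
    by (rule sys.intro) (use assms in auto)
  show ?thesis by (rule final)
qed

theorem lemma4p1:
  fixes a1 b1 a1' b1' a2 b2 a2' b2' \<epsilon> k1 k2 k3 k4 :: real
    and x :: "real \<Rightarrow> real \<times> real"
  assumes nonneg: "a1 \<ge> 0" "b1 \<ge> 0" "a1' \<ge> 0" "b1' \<ge> 0"
                  "a2 \<ge> 0" "b2 \<ge> 0" "a2' \<ge> 0" "b2' \<ge> 0"
    and indep: "(a1' - a1) * (b2' - b2) - (b1' - b1) * (a2' - a2) \<noteq> 0"
    and eps: "0 < \<epsilon>" "\<epsilon> < 1"
    and sol: "is_solution a1 b1 a1' b1' a2 b2 a2' b2' k1 k2 k3 k4 x"
  defines "C1 \<equiv> {p \<in> pos_quad. mono2 (a1' - a1) (b1' - b1) p = 1 / \<epsilon>\<^sup>2}"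
    and "C2 \<equiv> {p \<in> pos_quad. mono2 (a1' - a1) (b1' - b1) p = \<epsilon>\<^sup>2}"
    and "C3 \<equiv> {p \<in> pos_quad. mono2 (a2' - a2) (b2' - b2) p = \<epsilon>\<^sup>2}"
    and "C4 \<equiv> {p \<in> pos_quad. mono2 (a2' - a2) (b2' - b2) p = 1 / \<epsilon>\<^sup>2}"
  shows "(k1 = \<epsilon> \<and> k2 = 1 / \<epsilon> \<and> k3 = 1 / \<epsilon> \<and> k4 = \<epsilon> \<longrightarrow>
            (\<exists>A. C2 \<inter> C4 = {A} \<and> (x \<longlongrightarrow> A) at_top))
       \<and> (k1 = 1 / \<epsilon> \<and> k2 = \<epsilon> \<and> k3 = 1 / \<epsilon> \<and> k4 = \<epsilon> \<longrightarrow>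
            (\<exists>B. C1 \<inter> C4 = {B} \<and> (x \<longlongrightarrow> B) at_top))
       \<and> (k1 = 1 / \<epsilon> \<and> k2 = \<epsilon> \<and> k3 = \<epsilon> \<and> k4 = 1 / \<epsilon> \<longrightarrow>
            (\<exists>C. C1 \<inter> C3 = {C} \<and> (x \<longlongrightarrow> C) at_top))
       \<and> (k1 = \<epsilon> \<and> k2 = 1 / \<epsilon> \<and> k3 = \<epsilon> \<and> k4 = 1 / \<epsilon> \<longrightarrow>
            (\<exists>D. C2 \<inter> C3 = {D} \<and> (x \<longlongrightarrow> D) at_top))"
proof -
  have q1: "\<epsilon> / (1 / \<epsilon>) = \<epsilon>\<^sup>2" by (simp add: power2_eq_square)
  have q2: "(1 / \<epsilon>) / \<epsilon> = 1 / \<epsilon>\<^sup>2" by (simp add: power2_eq_square)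
  have q3: "\<epsilon> / \<epsilon> = 1" "(1/\<epsilon>) / (1/\<epsilon>) = 1" using eps by auto
  have pe: "1 / \<epsilon> > 0" using eps by simp
  note G = general[OF indep _ _ _ _ sol]
  show ?thesis
  proof (intro conjI impI)
    assume h: "k1 = \<epsilon> \<and> k2 = 1 / \<epsilon> \<and> k3 = 1 / \<epsilon> \<and> k4 = \<epsilon>"
    have k: "k1/k2 = \<epsilon>\<^sup>2" "k3/k4 = 1 / \<epsilon>\<^sup>2" using h q1 q2 by auto
    show "\<exists>A. C2 \<inter> C4 = {A} \<and> (x \<longlongrightarrow> A) at_top"
      using G h eps pe unfolding C2_def C4_def k by auto
  next
    assume h: "k1 = 1 / \<epsilon> \<and> k2 = \<epsilon> \<and> k3 = 1 / \<epsilon> \<and> k4 = \<epsilon>"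
    have k: "k1/k2 = 1 / \<epsilon>\<^sup>2" "k3/k4 = 1 / \<epsilon>\<^sup>2" using h q2 by auto
    show "\<exists>B. C1 \<inter> C4 = {B} \<and> (x \<longlongrightarrow> B) at_top"
      using G h eps pe unfolding C1_def C4_def k by auto
  next
    assume h: "k1 = 1 / \<epsilon> \<and> k2 = \<epsilon> \<and> k3 = \<epsilon> \<and> k4 = 1 / \<epsilon>"
    have k: "k1/k2 = 1 / \<epsilon>\<^sup>2" "k3/k4 = \<epsilon>\<^sup>2" using h q1 q2 by auto
    show "\<exists>C. C1 \<inter> C3 = {C} \<and> (x \<longlongrightarrow> C) at_top"
      using G h eps pe unfolding C1_def C3_def k by auto
  next
    assume h: "k1 = \<epsilon> \<and> k2 = 1 / \<epsilon> \<and> k3 = \<epsilon> \<and> k4 = 1 / \<epsilon>"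
    have k: "k1/k2 = \<epsilon>\<^sup>2" "k3/k4 = \<epsilon>\<^sup>2" using h q1 by auto
    show "\<exists>D. C2 \<inter> C3 = {D} \<and> (x \<longlongrightarrow> D) at_top"
      using G h eps pe unfolding C2_def C3_def k by auto
  qed
qed


end
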